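(* There is a constant $C>0$ such that the following holds. Let $\epsilon\in(0,1)$, let $\ell,q\ge0$ be integers, and let $\mathcal B=(\mathcal L,\mathcal Q)$ be a quadratic factor on $G=\mathbb{F}_p^n$ of complexity $(\ell,q)$ and rank at least $C(\ell+q+\log_p(\epsilon^{-1}))$. Then for every $B\in\mathrm{At}(\mathcal B)$, $$|\Omega_B|=(1\pm\epsilon)p^{4n-4\ell-7q},$$ i.e. $\big||\Omega_B|-p^{4n-4\ell-7q}\big|\le\epsilon p^{4n-4\ell-7q}$.
   Context: $p$ is an odd prime. Quadratic factors: For $\ell\ge1$, a linear factor of complexity $\ell$ on $\mathbb{F}_p^n$ is a linearly independent set $\mathcal{L}=\{r_1,\dots,r_\ell\}\subseteq\mathbb{F}_p^n$ (with a fixed enumeration); the linear factor of complexity $0$ is $\emptyset$. Put $\beta_{\mathcal L}(x)=(x\cdot r_1,\dots,x\cdot r_\ell)\in\mathbb{F}_p^\ell$ (the zero map to $\mathbb{F}_p^0$ if $\ell=0$). For $q\ge 1$, a purely quadratic factor of complexity $q$ is a set $\mathcal{Q}=\{M_1,\dots,M_q\}$ of pairwise distinct symmetric $n\times n$ matrices over $\mathbb{F}_p$ (the empty set if $q=0$); put $\beta_{\mathcal Q}(x,y)=(x^TM_1y,\dots,x^TM_qy)\in\mathbb{F}_p^q$. The rank of $\mathcal Q$ is $n$ if $q=0$, and otherwise the minimum of $\mathrm{rk}(\lambda_1M_1+\dots+\lambda_qM_q)$ over $(\lambda_1,\dots,\lambda_q)\neq 0$. A quadratic factor of complexity $(\ell,q)$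 is a pair $\mathcal{B}=(\mathcal L,\mathcal Q)$ of these; its rank is the rank of $\mathcal Q$; $\beta_{\mathcal B}(x)=(\beta_{\mathcal L}(x),\beta_{\mathcal Q}(x,x))$; its atoms are the sets $B(a,b)=\beta_{\mathcal B}^{-1}(a,b)$, and $\mathrm{At}(\mathcal B)$ is the set of atoms. $\Omega_B=\{(x,h_1,h_2,h_3)\in G^4: x+\omega_1h_1+\omega_2h_2+\omega_3h_3\in B \text{ for all }\omega\in\{0,1\}^3\}$. *)

theory Defs
  imports Complex_Main "HOL-Computational_Algebra.Primes"
begin

text \<open>Explicit model of F_p^n: vectors are functions nat => int with entries in
  {0..<p} at coordinates below n and 0 elsewhere; arithmetic is taken mod p.\<close>

definition Fpn :: "nat \<Rightarrow> nat \<Rightarrow> (nat \<Rightarrow> int) set" where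
  "Fpn p n = {x. (\<forall>i<n. 0 \<le> x i \<and> x i < int p) \<and> (\<forall>i. n \<le> i \<longrightarrow> x i = 0)}"

definition vadd :: "nat \<Rightarrow> (nat \<Rightarrow> int) \<Rightarrow> (nat \<Rightarrow> int) \<Rightarrow> (nat \<Rightarrow> int)" where
  "vadd p x y = (\<lambda>i. (x i + y i) mod int p)"

definition dotp :: "nat \<Rightarrow> nat \<Rightarrow> (nat \<Rightarrow> int) \<Rightarrow> (nat \<Rightarrow> int) \<Rightarrow> int" where
  "dotp p n x y = (\<Sum>i<n. x i * y i) mod int p"

definition Matp :: "nat \<Rightarrow> nat \<Rightarrow> (nat \<Rightarrow> nat \<Rightarrow> int) set" where
  "Matp p n = {M. (\<forall>i<n. \<forall>j<n. 0 \<le> M i j \<and> M i j < int p) \<and>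
                  (\<forall>i j. \<not> (i < n \<and> j < n) \<longrightarrow> M i j = 0)}"

definition symmetric_mat :: "nat \<Rightarrow> (nat \<Rightarrow> nat \<Rightarrow> int) \<Rightarrow> bool" where
  "symmetric_mat n M \<longleftrightarrow> (\<forall>i<n. \<forall>j<n. M i j = M j i)"

definition bilin :: "nat \<Rightarrow> nat \<Rightarrow> (nat \<Rightarrow> nat \<Rightarrow> int) \<Rightarrow> (nat \<Rightarrow> int) \<Rightarrow> (nat \<Rightarrow> int) \<Rightarrow> int" where
  "bilin p n M x y = (\<Sum>i<n. \<Sum>j<n. x i * M i j * y j) mod int p"

definition lin_indep_Fp :: "nat \<Rightarrow> nat \<Rightarrow> nat set \<Rightarrow> (nat \<Rightarrow> nat \<Rightarrow> int) \<Rightarrow> bool" where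
  "lin_indep_Fp p n S v \<longleftrightarrow>
     (\<forall>c. (\<forall>k\<in>S. 0 \<le> c k \<and> c k < int p) \<and>
          (\<forall>i<n. (\<Sum>k\<in>S. c k * v k i) mod int p = 0) \<longrightarrow> (\<forall>k\<in>S. c k = 0))"

definition mat_rank :: "nat \<Rightarrow> nat \<Rightarrow> (nat \<Rightarrow> nat \<Rightarrow> int) \<Rightarrow> nat" where
  "mat_rank p n M = Max {card S | S. S \<subseteq> {..<n} \<and> lin_indep_Fp p n S (\<lambda>k i. M i k)}"

definition is_linear_factor :: "nat \<Rightarrow> nat \<Rightarrow> (nat \<Rightarrow> int) list \<Rightarrow> bool" where
  "is_linear_factor p n rs \<longleftrightarrow> set rs \<subseteq> Fpn p n \<and> lin_indep_Fp p n {..<length rs} (\<lambda>k. rs ! k)"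

definition is_purely_quadratic_factor :: "nat \<Rightarrow> nat \<Rightarrow> (nat \<Rightarrow> nat \<Rightarrow> int) list \<Rightarrow> bool" where
  "is_purely_quadratic_factor p n Ms \<longleftrightarrow>
     distinct Ms \<and> (\<forall>M\<in>set Ms. M \<in> Matp p n \<and> symmetric_mat n M)"

definition quad_rank :: "nat \<Rightarrow> nat \<Rightarrow> (nat \<Rightarrow> nat \<Rightarrow> int) list \<Rightarrow> nat" where
  "quad_rank p n Ms =
     (if Ms = [] then n
      else Min {mat_rank p n (\<lambda>i j. (\<Sum>k<length Ms. lam k * (Ms ! k) i j) mod int p) | lam.
                  (\<forall>k<length Ms. 0 \<le> lam k \<and> lam k < int p) \<and> (\<forall>k. length Ms \<le> k \<longrightarrow> lam k = 0)
                  \<and> (\<exists>k<length Ms. lam k \<noteq> 0)})"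

definition beta_factor :: "nat \<Rightarrow> nat \<Rightarrow> (nat \<Rightarrow> int) list \<Rightarrow> (nat \<Rightarrow> nat \<Rightarrow> int) list
    \<Rightarrow> (nat \<Rightarrow> int) \<Rightarrow> int list \<times> int list" where
  "beta_factor p n rs Ms x = (map (\<lambda>r. dotp p n x r) rs, map (\<lambda>M. bilin p n M x x) Ms)"

definition atoms :: "nat \<Rightarrow> nat \<Rightarrow> (nat \<Rightarrow> int) list \<Rightarrow> (nat \<Rightarrow> nat \<Rightarrow> int) list
    \<Rightarrow> (nat \<Rightarrow> int) set set" where
  "atoms p n rs Ms =
     {{x \<in> Fpn p n. beta_factor p n rs Ms x = (a, b)} | a b.
        length a = length rs \<and> length b = length Ms \<and>
        set a \<subseteq> {0..<int p} \<and> set b \<subseteq> {0..<int p}}"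

definition Omega :: "nat \<Rightarrow> nat \<Rightarrow> (nat \<Rightarrow> int) set
    \<Rightarrow> ((nat \<Rightarrow> int) \<times> (nat \<Rightarrow> int) \<times> (nat \<Rightarrow> int) \<times> (nat \<Rightarrow> int)) set" where
  "Omega p n B = {(x, h1, h2, h3). x \<in> Fpn p n \<and> h1 \<in> Fpn p n \<and> h2 \<in> Fpn p n \<and> h3 \<in> Fpn p n \<and>
     (\<forall>w1 w2 w3 :: bool.
        vadd p (vadd p (vadd p x (if w1 then h1 else (\<lambda>_. 0))) (if w2 then h2 else (\<lambda>_. 0)))
               (if w3 then h3 else (\<lambda>_. 0)) \<in> B)}"

end

theory Submission
  imports Defs "HOL-Library.FuncSet"
begin


definition om :: "nat \<Rightarrow> int \<Rightarrow> complex" where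
  "om p t = cis (2 * pi * of_int t / real p)"

lemma om_add: "om p (a + b) = om p a * om p b"
  by (simp add: om_def cis_mult add_divide_distrib distrib_left)

lemma om_norm[simp]: "norm (om p a) = 1"
  by (simp add: om_def)

lemma om_cnj: "cnj (om p a) = om p (-a)"
  by (simp add: om_def cis_cnj)

lemma om_0[simp]: "om p 0 = 1"
  by (simp add: om_def)

lemma om_period: assumes "p > 0" shows "om p (a + int p * k) = om p a"
proof -
  have "2 * pi * of_int (a + int p * k) / real p = 2 * pi * of_int a / real p + 2 * pi * of_int k"
    using assms by (simp add: field_simps)
  then show ?thesis
    by (simp add: om_def cis_mult[symmetric])
qed

lemma om_dvd: assumes "p > 0" "int p dvd (a - b)" shows "om p a = om p b"
proof -
  obtain k where "a - b = int p * k" using assms(2) by (auto elim: dvdE)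
  then have "a = b + int p * k" by simp
  then show ?thesis using om_period[OF assms(1)] by simp
qed

lemma om_eq_1: assumes "p > 0" "om p u = 1" shows "int p dvd u"
proof -
  have "cos (2 * pi * of_int u / real p) = 1"
    using assms(2) unfolding om_def by (metis cis.sel(1) one_complex.sel(1))
  then obtain m :: int where m: "2 * pi * of_int u / real p = of_int m * 2 * pi"
    by (auto simp: cos_one_2pi_int)
  then have "real_of_int u = of_int m * real p" using assms(1) pi_gt_zero
    by (simp add: field_simps)
  then have "u = m * int p" by (metis of_int_eq_iff of_int_mult of_int_of_nat_eq)
  then show ?thesis by simp
qed

lemma om_pow: "om p u ^ k = om p (int k * u)"
  by (simp add: om_def DeMoivre mult_ac)

lemma om_sum_nat: assumes "p > 0"
  shows "(\<Sum>a<p. om p (int a * u)) = (if int p dvd u then of_nat p else 0)"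
proof (cases "int p dvd u")
  case True
  then have "\<And>a. om p (int a * u) = 1"
    using om_dvd[OF assms, of "int _ * u" 0] by (simp add: dvd_mult)
  then show ?thesis using True by simp
next
  case False
  let ?z = "om p u"
  have z1: "?z \<noteq> 1" using om_eq_1[OF assms] False by blast
  have zp: "?z ^ p = 1" using om_pow[of p u p] om_dvd[OF assms, of "int p * u" 0] by simp
  have "(\<Sum>a<p. om p (int a * u)) = (\<Sum>a<p. ?z ^ a)" by (simp add: om_pow)
  also have "\<dots> = 0" using geometric_sum[OF z1, of p] zp by simp
  finally show ?thesis using False by simp
qed

lemma om_sum_int: assumes "p > 0"
  shows "(\<Sum>a\<in>{0..<int p}. om p (a * u)) = (if int p dvd u then of_nat p else 0)"
proof -
  have "{0..<int p} = int ` {..<p}" by (auto simp: image_iff intro!: bexI[of _ "nat _"])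
  then have "(\<Sum>a\<in>{0..<int p}. om p (a * u)) = (\<Sum>a<p. om p (int a * u))"
    by (simp add: sum.reindex)
  then show ?thesis using om_sum_nat[OF assms] by simp
qed

lemma om_sum_prod: "finite A \<Longrightarrow> om p (sum f A) = (\<Prod>i\<in>A. om p (f i))"
  by (induction A rule: finite_induct) (auto simp: om_add)

definition box :: "nat \<Rightarrow> nat set \<Rightarrow> (nat \<Rightarrow> int) set" where
  "box p S = {x. (\<forall>i\<in>S. 0 \<le> x i \<and> x i < int p) \<and> (\<forall>i. i \<notin> S \<longrightarrow> x i = 0)}"

lemma box_bij: "bij_betw (\<lambda>x. restrict x S) (box p S) (PiE S (\<lambda>_. {0..<int p}))"
proof (rule bij_betw_byWitness[where f' = "\<lambda>t i. if i \<in> S then t i else 0"])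
  show "\<forall>a\<in>box p S. (\<lambda>i. if i \<in> S then restrict a S i else 0) = a"
    by (auto simp: box_def fun_eq_iff)
  show "\<forall>a'\<in>PiE S (\<lambda>_. {0..<int p}). restrict (\<lambda>i. if i \<in> S then a' i else 0) S = a'"
    by (auto simp: PiE_def extensional_def fun_eq_iff)
  show "(\<lambda>x. restrict x S) ` box p S \<subseteq> PiE S (\<lambda>_. {0..<int p})"
    by (auto simp: box_def)
  show "(\<lambda>t i. if i \<in> S then t i else 0) ` PiE S (\<lambda>_. {0..<int p}) \<subseteq> box p S"
    by (auto simp: box_def)
qed

lemma box_card: "finite S \<Longrightarrow> card (box p S) = p ^ card S"
  using bij_betw_same_card[OF box_bij[of S p]] by (simp add: card_PiE)

lemma box_finite: "finite S \<Longrightarrow> finite (box p S)"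
  using bij_betw_finite[OF box_bij[of S p]] by (simp add: finite_PiE)

lemma box_sum_prod:
  fixes f :: "nat \<Rightarrow> int \<Rightarrow> 'c::comm_semiring_1"
  assumes "finite S"
  shows "(\<Sum>x\<in>box p S. \<Prod>i\<in>S. f i (x i)) = (\<Prod>i\<in>S. \<Sum>a\<in>{0..<int p}. f i a)"
proof -
  have "(\<Sum>x\<in>box p S. \<Prod>i\<in>S. f i (x i)) = (\<Sum>x\<in>box p S. \<Prod>i\<in>S. f i (restrict x S i))"
    by (intro sum.cong prod.cong) auto
  also have "\<dots> = (\<Sum>t\<in>PiE S (\<lambda>_. {0..<int p}). \<Prod>i\<in>S. f i (t i))"
    using sum.reindex_bij_betw[OF box_bij[of S p], of "\<lambda>t. \<Prod>i\<in>S. f i (t i)"] by simp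
  also have "\<dots> = (\<Prod>i\<in>S. \<Sum>a\<in>{0..<int p}. f i a)"
    by (rule prod_sum_PiE[symmetric]) (use assms in auto)
  finally show ?thesis .
qed

lemma Fpn_box: "Fpn p n = box p {..<n}"
  by (auto simp: Fpn_def box_def)

definition dt :: "nat \<Rightarrow> (nat \<Rightarrow> int) \<Rightarrow> (nat \<Rightarrow> int) \<Rightarrow> int" where
  "dt n u v = (\<Sum>i<n. u i * v i)"

lemma char_V: assumes "p > 0"
  shows "(\<Sum>x\<in>Fpn p n. om p (dt n x u)) = (if \<forall>i<n. int p dvd u i then of_nat p ^ n else 0)"
proof -
  have "(\<Sum>x\<in>Fpn p n. om p (dt n x u)) = (\<Sum>x\<in>box p {..<n}. \<Prod>i\<in>{..<n}. om p (x i * u i))"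
    by (simp add: Fpn_box dt_def om_sum_prod)
  also have "\<dots> = (\<Prod>i\<in>{..<n}. \<Sum>a\<in>{0..<int p}. om p (a * u i))"
    by (rule box_sum_prod) simp
  also have "\<dots> = (\<Prod>i\<in>{..<n}. (if int p dvd u i then of_nat p else 0))"
    using om_sum_int[OF assms] by simp
  also have "\<dots> = (if \<forall>i<n. int p dvd u i then of_nat p ^ n else 0)"
    by (auto simp: prod_zero_iff)
  finally show ?thesis .
qed



lemma indicator_om: assumes "p > 0"
  shows "(of_bool (int p dvd a) :: complex) = (1 / of_nat p) * (\<Sum>s\<in>{0..<int p}. om p (s * a))"
  using om_sum_int[OF assms, of a] assms by simp

lemma of_bool_ball: "finite J \<Longrightarrow> (of_bool (\<forall>j\<in>J. P j) :: complex) = (\<Prod>j\<in>J. of_bool (P j))"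
  by (induction J rule: finite_induct) auto

lemma count_char:
  fixes \<phi> :: "'j \<Rightarrow> 'z \<Rightarrow> int"
  assumes p: "p > 0" and Z: "finite Z" and J: "finite J"
  shows "(of_nat (card {z\<in>Z. \<forall>j\<in>J. int p dvd (\<phi> j z - c j)}) :: complex) =
    (1 / of_nat p) ^ card J * (\<Sum>t\<in>PiE J (\<lambda>_. {0..<int p}). \<Sum>z\<in>Z. om p (\<Sum>j\<in>J. t j * (\<phi> j z - c j)))"
proof -
  have "(of_nat (card {z\<in>Z. \<forall>j\<in>J. int p dvd (\<phi> j z - c j)}) :: complex)
      = (\<Sum>z\<in>Z. of_bool (\<forall>j\<in>J. int p dvd (\<phi> j z - c j)))"
    using Z by (simp add: Int_def conj_commute)
  also have "\<dots> = (\<Sum>z\<in>Z. \<Prod>j\<in>J. (1 / of_nat p) * (\<Sum>s\<in>{0..<int p}. om p (s * (\<phi> j z - c j))))"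
    using J by (simp add: of_bool_ball indicator_om[OF p])
  also have "\<dots> = (\<Sum>z\<in>Z. (1 / of_nat p) ^ card J * (\<Prod>j\<in>J. \<Sum>s\<in>{0..<int p}. om p (s * (\<phi> j z - c j))))"
    by (intro sum.cong refl) (simp only: prod.distrib prod_constant)
  also have "\<dots> = (\<Sum>z\<in>Z. (1 / of_nat p) ^ card J * (\<Sum>t\<in>PiE J (\<lambda>_. {0..<int p}). \<Prod>j\<in>J. om p (t j * (\<phi> j z - c j))))"
    using J by (simp add: prod_sum_PiE)
  also have "\<dots> = (\<Sum>z\<in>Z. (1 / of_nat p) ^ card J * (\<Sum>t\<in>PiE J (\<lambda>_. {0..<int p}). om p (\<Sum>j\<in>J. t j * (\<phi> j z - c j))))"
    using J by (simp add: om_sum_prod)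
  also have "\<dots> = (1 / of_nat p) ^ card J * (\<Sum>t\<in>PiE J (\<lambda>_. {0..<int p}). \<Sum>z\<in>Z. om p (\<Sum>j\<in>J. t j * (\<phi> j z - c j)))"
    by (simp add: sum_distrib_left sum.swap[of _ Z])
  finally show ?thesis .
qed

lemma count_bound:
  fixes \<phi> :: "'j \<Rightarrow> 'z \<Rightarrow> int"
  assumes p: "p > 0" and Z: "finite Z" and J: "finite J" and X: "X \<ge> 0"
    and bnd: "\<And>t. t \<in> PiE J (\<lambda>_. {0..<int p}) \<Longrightarrow> (\<exists>j\<in>J. t j \<noteq> 0) \<Longrightarrow>
        norm (\<Sum>z\<in>Z. om p (\<Sum>j\<in>J. t j * \<phi> j z)) \<le> X"
  shows "\<bar>real (card {z\<in>Z. \<forall>j\<in>J. int p dvd (\<phi> j z - c j)}) - real (card Z) / real p ^ card J\<bar> \<le> X"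
proof -
  let ?P = "PiE J (\<lambda>_. {0..<int p})"
  let ?t0 = "restrict (\<lambda>_. 0::int) J"
  let ?S = "\<lambda>t. \<Sum>z\<in>Z. om p (\<Sum>j\<in>J. t j * (\<phi> j z - c j))"
  have t0: "?t0 \<in> ?P" using p by auto
  have fin: "finite ?P" using J by (simp add: finite_PiE)
  have S0: "?S ?t0 = of_nat (card Z)"
    by simp
  have Sb: "norm (?S t) \<le> X" if "t \<in> ?P - {?t0}" for t
  proof -
    have ex: "\<exists>j\<in>J. t j \<noteq> 0"
    proof (rule ccontr)
      assume "\<not> ?thesis"
      then have "t = ?t0" using that by (auto simp: PiE_def extensional_def fun_eq_iff)
      then show False using that by simp
    qed
    have "?S t = (\<Sum>z\<in>Z. om p (- (\<Sum>j\<in>J. t j * c j)) * om p (\<Sum>j\<in>J. t j * \<phi> j z))"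
      by (intro sum.cong refl) (simp add: om_add[symmetric] right_diff_distrib sum_subtractf)
    also have "\<dots> = om p (- (\<Sum>j\<in>J. t j * c j)) * (\<Sum>z\<in>Z. om p (\<Sum>j\<in>J. t j * \<phi> j z))"
      by (simp add: sum_distrib_left)
    finally have "norm (?S t) = norm (\<Sum>z\<in>Z. om p (\<Sum>j\<in>J. t j * \<phi> j z))"
      by (simp add: norm_mult)
    then show ?thesis using bnd[OF _ ex] that by simp
  qed
  have D: "(\<Sum>t\<in>?P. ?S t) = of_nat (card Z) + (\<Sum>t\<in>?P - {?t0}. ?S t)"
    using sum.remove[OF fin t0, of ?S] S0 by simp
  have cardP: "card ?P = p ^ card J" using J by (simp add: card_PiE)
  have "norm (\<Sum>t\<in>?P - {?t0}. ?S t) \<le> (\<Sum>t\<in>?P - {?t0}. X)"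
    by (rule order_trans[OF norm_sum sum_mono]) (use Sb in auto)
  also have "\<dots> \<le> real p ^ card J * X"
  proof -
    have "card (?P - {?t0}) \<le> p ^ card J" using card_Diff1_le[of ?P ?t0] fin cardP by simp
    then have "real (card (?P - {?t0})) \<le> real p ^ card J"
      by (metis of_nat_le_iff of_nat_power)
    then show ?thesis using X by (simp add: mult_right_mono)
  qed
  finally have E: "norm (\<Sum>t\<in>?P - {?t0}. ?S t) \<le> real p ^ card J * X" .
  have ppos: "real p ^ card J > 0" using p by simp
  have "(of_nat (card {z\<in>Z. \<forall>j\<in>J. int p dvd (\<phi> j z - c j)}) :: complex) - of_nat (card Z) / of_nat p ^ card J
        = (1 / of_nat p) ^ card J * (\<Sum>t\<in>?P - {?t0}. ?S t)"
  proof -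
    have e: "of_nat (card Z) / (of_nat p ^ card J :: complex) = (1 / of_nat p) ^ card J * of_nat (card Z)"
      by (simp add: power_one_over)
    show ?thesis unfolding count_char[OF p Z J] D e by (simp only: algebra_simps)
  qed
  note EQ = this
  have "norm ((of_nat (card {z\<in>Z. \<forall>j\<in>J. int p dvd (\<phi> j z - c j)}) :: complex) - of_nat (card Z) / of_nat p ^ card J)
       = (1 / real p) ^ card J * norm (\<Sum>t\<in>?P - {?t0}. ?S t)"
  proof -
    have "norm ((1 / of_nat p) ^ card J :: complex) = (1/real p)^card J"
      by (simp only: norm_power norm_divide norm_one norm_of_nat)
    then show ?thesis unfolding EQ by (simp only: norm_mult)
  qed
  also have "\<dots> \<le> (1 / real p) ^ card J * (real p ^ card J * X)"
    by (rule mult_left_mono[OF E]) simp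
  also have "\<dots> = X" using ppos by (simp add: power_one_over)
  finally have N: "norm ((of_nat (card {z\<in>Z. \<forall>j\<in>J. int p dvd (\<phi> j z - c j)}) :: complex) - of_nat (card Z) / of_nat p ^ card J) \<le> X" .
  have "(of_nat (card {z\<in>Z. \<forall>j\<in>J. int p dvd (\<phi> j z - c j)}) :: complex) - of_nat (card Z) / of_nat p ^ card J
     = complex_of_real (real (card {z\<in>Z. \<forall>j\<in>J. int p dvd (\<phi> j z - c j)}) - real (card Z) / real p ^ card J)"
    by (simp only: of_real_diff of_real_divide of_real_of_nat_eq of_real_power)
  then show ?thesis using N by (simp only: norm_of_real)
qed



definition vp :: "(nat \<Rightarrow> int) \<Rightarrow> (nat \<Rightarrow> int) \<Rightarrow> (nat \<Rightarrow> int)" where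
  "vp u v = (\<lambda>i. u i + v i)"

definition mv :: "nat \<Rightarrow> (nat \<Rightarrow> nat \<Rightarrow> int) \<Rightarrow> (nat \<Rightarrow> int) \<Rightarrow> (nat \<Rightarrow> int)" where
  "mv n N v = (\<lambda>i. \<Sum>j<n. N i j * v j)"

definition qf :: "nat \<Rightarrow> (nat \<Rightarrow> nat \<Rightarrow> int) \<Rightarrow> (nat \<Rightarrow> int) \<Rightarrow> (nat \<Rightarrow> int) \<Rightarrow> int" where
  "qf n N u v = (\<Sum>i<n. \<Sum>j<n. u i * N i j * v j)"

lemma dt_vp_left: "dt n (vp u u') v = dt n u v + dt n u' v"
  by (simp add: dt_def vp_def algebra_simps sum.distrib)
lemma dt_vp_right: "dt n v (vp u u') = dt n v u + dt n v u'"
  by (simp add: dt_def vp_def algebra_simps sum.distrib)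
lemma mv_vp: "mv n N (vp u u') = vp (mv n N u) (mv n N u')"
  by (simp add: mv_def vp_def algebra_simps sum.distrib fun_eq_iff)
lemma qf_mv: "qf n N u v = dt n u (mv n N v)"
  by (simp add: qf_def dt_def mv_def sum_distrib_left mult.assoc)
lemma dt_mv_sym: assumes "symmetric_mat n N" shows "dt n u (mv n N v) = dt n v (mv n N u)"
proof -
  have "dt n u (mv n N v) = (\<Sum>i<n. \<Sum>j<n. u i * N i j * v j)"
    by (simp add: dt_def mv_def sum_distrib_left mult.assoc)
  also have "\<dots> = (\<Sum>j<n. \<Sum>i<n. u i * N i j * v j)" by (rule sum.swap)
  also have "\<dots> = (\<Sum>j<n. \<Sum>i<n. v j * N j i * u i)"
    using assms by (intro sum.cong refl) (simp add: symmetric_mat_def mult_ac)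
  also have "\<dots> = dt n v (mv n N u)"
    by (simp add: dt_def mv_def sum_distrib_left mult.assoc)
  finally show ?thesis .
qed

lemma qf_exp1: assumes "symmetric_mat n N"
  shows "qf n N (vp u d) (vp u d) = qf n N u u + qf n N d d + 2 * dt n u (mv n N d)"
  using dt_mv_sym[OF assms, of d u]
  by (simp add: qf_mv mv_vp dt_vp_left dt_vp_right)

lemma qf_exp2: assumes "symmetric_mat n N"
  shows "qf n N (vp u a) (vp v b) = qf n N u v + qf n N a b + dt n u (mv n N b) + dt n v (mv n N a)"
  using dt_mv_sym[OF assms, of a v]
  by (simp add: qf_mv mv_vp dt_vp_left dt_vp_right)

type_synonym vec = "nat \<Rightarrow> int"
type_synonym quad = "vec \<times> vec \<times> vec \<times> vec"

definition PhiL :: "nat \<Rightarrow> (nat \<Rightarrow> vec) \<Rightarrow> quad \<Rightarrow> int" where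
  "PhiL n U z = (case z of (x, h1, h2, h3) \<Rightarrow>
     dt n x (U 0) + dt n h1 (U 1) + dt n h2 (U 2) + dt n h3 (U 3))"

definition PhiQ :: "nat \<Rightarrow> (nat \<Rightarrow> nat \<Rightarrow> nat \<Rightarrow> int) \<Rightarrow> quad \<Rightarrow> int" where
  "PhiQ n N z = (case z of (x, h1, h2, h3) \<Rightarrow>
     qf n (N 0) x x + (2 * qf n (N 1) x h1 + qf n (N 1) h1 h1)
     + (2 * qf n (N 2) x h2 + qf n (N 2) h2 h2) + (2 * qf n (N 3) x h3 + qf n (N 3) h3 h3)
     + 2 * qf n (N 4) h1 h2 + 2 * qf n (N 5) h1 h3 + 2 * qf n (N 6) h2 h3)"

definition zp :: "quad \<Rightarrow> quad \<Rightarrow> quad" where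
  "zp w d = (case w of (x, h1, h2, h3) \<Rightarrow> case d of (d0, d1, d2, d3) \<Rightarrow>
      (vp x d0, vp h1 d1, vp h2 d2, vp h3 d3))"

definition GG :: "nat \<Rightarrow> (nat \<Rightarrow> nat \<Rightarrow> nat \<Rightarrow> int) \<Rightarrow> quad \<Rightarrow> nat \<Rightarrow> vec" where
  "GG n N d s = (case d of (d0, d1, d2, d3) \<Rightarrow>
     if s = 0 then vp (vp (vp (mv n (N 0) d0) (mv n (N 1) d1)) (mv n (N 2) d2)) (mv n (N 3) d3)
     else if s = 1 then vp (vp (vp (mv n (N 1) d0) (mv n (N 1) d1)) (mv n (N 4) d2)) (mv n (N 5) d3)
     else if s = 2 then vp (vp (vp (mv n (N 2) d0) (mv n (N 2) d2)) (mv n (N 4) d1)) (mv n (N 6) d3)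
     else vp (vp (vp (mv n (N 3) d0) (mv n (N 3) d3)) (mv n (N 5) d1)) (mv n (N 6) d2))"

definition beta :: "nat \<Rightarrow> (nat \<Rightarrow> nat \<Rightarrow> nat \<Rightarrow> int) \<Rightarrow> quad \<Rightarrow> quad \<Rightarrow> int" where
  "beta n N w d = (case w of (x, h1, h2, h3) \<Rightarrow>
     dt n x (GG n N d 0) + dt n h1 (GG n N d 1) + dt n h2 (GG n N d 2) + dt n h3 (GG n N d 3))"

lemma PhiL_add: "PhiL n U (zp w d) = PhiL n U w + PhiL n U d"
  by (cases w; cases d) (simp add: PhiL_def zp_def dt_vp_left)

lemma PhiQ_add: assumes "\<And>k. symmetric_mat n (N k)"
  shows "PhiQ n N (zp w d) = PhiQ n N w + PhiQ n N d + 2 * beta n N w d"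
proof -
  obtain x h1 h2 h3 where w: "w = (x, h1, h2, h3)" by (cases w) auto
  obtain d0 d1 d2 d3 where d: "d = (d0, d1, d2, d3)" by (cases d) auto
  show ?thesis
    unfolding w d PhiQ_def zp_def beta_def GG_def
    by (simp add: qf_exp1[OF assms] qf_exp2[OF assms] dt_vp_right algebra_simps)
qed



lemma mod_sum_cong: "(\<And>i. i \<in> A \<Longrightarrow> f i mod m = g i mod m) \<Longrightarrow> sum f A mod (m::int) = sum g A mod m"
  by (metis (no_types, lifting) mod_sum_eq sum.cong)

lemma dt_mod: "(\<And>i. i < n \<Longrightarrow> x i mod m = x' i mod m) \<Longrightarrow> dt n x u mod m = dt n x' u mod (m::int)"
  unfolding dt_def by (rule mod_sum_cong) (auto intro: mod_mult_cong)

lemma qf_mod: "(\<And>i. i < n \<Longrightarrow> x i mod m = x' i mod m) \<Longrightarrow> (\<And>i. i < n \<Longrightarrow> y i mod m = y' i mod m) \<Longrightarrow>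
   qf n N x y mod m = qf n N x' y' mod (m::int)"
  unfolding qf_def by (intro mod_sum_cong) (auto intro!: mod_mult_cong)

definition zcong :: "nat \<Rightarrow> int \<Rightarrow> quad \<Rightarrow> quad \<Rightarrow> bool" where
  "zcong n m z z' = (case z of (x, h1, h2, h3) \<Rightarrow> case z' of (x', h1', h2', h3') \<Rightarrow>
     (\<forall>i<n. x i mod m = x' i mod m \<and> h1 i mod m = h1' i mod m \<and> h2 i mod m = h2' i mod m \<and> h3 i mod m = h3' i mod m))"

lemma Phi_mod: assumes "zcong n m z z'"
  shows "(PhiL n U z + PhiQ n N z) mod m = (PhiL n U z' + PhiQ n N z') mod m"
proof -
  obtain x h1 h2 h3 where z: "z = (x, h1, h2, h3)" by (cases z) auto
  obtain x' h1' h2' h3' where z': "z' = (x', h1', h2', h3')" by (cases z') auto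
  have c: "\<And>i. i < n \<Longrightarrow> x i mod m = x' i mod m" "\<And>i. i < n \<Longrightarrow> h1 i mod m = h1' i mod m"
     "\<And>i. i < n \<Longrightarrow> h2 i mod m = h2' i mod m" "\<And>i. i < n \<Longrightarrow> h3 i mod m = h3' i mod m"
    using assms by (auto simp: zcong_def z z')
  note d = dt_mod[OF c(1)] dt_mod[OF c(2)] dt_mod[OF c(3)] dt_mod[OF c(4)]
  note q = qf_mod[OF c(1) c(1)] qf_mod[OF c(1) c(2)] qf_mod[OF c(1) c(3)] qf_mod[OF c(1) c(4)]
     qf_mod[OF c(2) c(2)] qf_mod[OF c(3) c(3)] qf_mod[OF c(4) c(4)]
     qf_mod[OF c(2) c(3)] qf_mod[OF c(2) c(4)] qf_mod[OF c(3) c(4)]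
  show ?thesis unfolding z z' PhiL_def PhiQ_def
    by (simp only: prod.case) (intro mod_add_cong mod_mult_cong refl d q)
qed

abbreviation V4 :: "nat \<Rightarrow> nat \<Rightarrow> quad set" where
  "V4 p n \<equiv> Fpn p n \<times> Fpn p n \<times> Fpn p n \<times> Fpn p n"

lemma finite_Fpn: "finite (Fpn p n)"
  by (simp add: Fpn_box box_finite)

lemma card_Fpn: "card (Fpn p n) = p ^ n"
  by (simp add: Fpn_box box_card)

lemma sum4: "(\<Sum>z\<in>V4 p n. f z) = (\<Sum>x\<in>Fpn p n. \<Sum>h1\<in>Fpn p n. \<Sum>h2\<in>Fpn p n. \<Sum>h3\<in>Fpn p n. f (x, h1, h2, h3))"
  by (simp add: sum.cartesian_product)

lemma vadd_inj: assumes "p > 0" shows "inj_on (vadd p w) (Fpn p n)"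
proof
  fix d d' assume d: "d \<in> Fpn p n" "d' \<in> Fpn p n" and e: "vadd p w d = vadd p w d'"
  show "d = d'"
  proof
    fix i show "d i = d' i"
    proof (cases "i < n")
      case True
      have "(w i + d i) mod int p = (w i + d' i) mod int p" using e by (simp add: vadd_def fun_eq_iff)
      then have "d i mod int p = d' i mod int p" by (metis add_diff_cancel_left' mod_diff_left_eq)
      then show ?thesis using d True by (simp add: Fpn_def)
    next
      case False then show ?thesis using d by (simp add: Fpn_def)
    qed
  qed
qed

lemma vadd_img: assumes "p > 0" "w \<in> Fpn p n" shows "vadd p w ` Fpn p n = Fpn p n"
proof -
  have sub: "vadd p w ` Fpn p n \<subseteq> Fpn p n"
    using assms by (auto simp: Fpn_def vadd_def)
  have "card (vadd p w ` Fpn p n) = card (Fpn p n)"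
    using vadd_inj[OF assms(1)] by (simp add: card_image)
  then show ?thesis using sub finite_Fpn by (simp add: card_subset_eq)
qed

lemma vadd_sum: assumes "p > 0" "w \<in> Fpn p n"
  shows "(\<Sum>d\<in>Fpn p n. g (vadd p w d)) = (\<Sum>d\<in>Fpn p n. g d)"
proof -
  have "sum g (vadd p w ` Fpn p n) = (\<Sum>d\<in>Fpn p n. g (vadd p w d))"
    using sum.reindex[OF vadd_inj[OF assms(1)], of g w] by (simp add: comp_def)
  then show ?thesis using vadd_img[OF assms] by simp
qed

definition zv :: "nat \<Rightarrow> quad \<Rightarrow> quad \<Rightarrow> quad" where
  "zv p w d = (case w of (x, h1, h2, h3) \<Rightarrow> case d of (d0, d1, d2, d3) \<Rightarrow>
      (vadd p x d0, vadd p h1 d1, vadd p h2 d2, vadd p h3 d3))"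

lemma zv_inj: assumes "p > 0" shows "inj_on (zv p w) (V4 p n)"
proof
  fix d d' assume d: "d \<in> V4 p n" "d' \<in> V4 p n" and e: "zv p w d = zv p w d'"
  obtain x h1 h2 h3 where w: "w = (x, h1, h2, h3)" by (cases w) auto
  obtain a0 a1 a2 a3 where a: "d = (a0, a1, a2, a3)" by (cases d) auto
  obtain b0 b1 b2 b3 where b: "d' = (b0, b1, b2, b3)" by (cases d') auto
  have "a0 = b0" "a1 = b1" "a2 = b2" "a3 = b3"
    using e d vadd_inj[OF assms, of _ n] unfolding w a b zv_def inj_on_def by auto
  then show "d = d'" using a b by simp
qed

lemma zv_sum: assumes "p > 0" "w \<in> V4 p n"
  shows "(\<Sum>d\<in>V4 p n. g (zv p w d)) = (\<Sum>d\<in>V4 p n. g d)"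
proof -
  have sub: "zv p w ` V4 p n \<subseteq> V4 p n"
    using assms by (cases w) (auto simp: zv_def Fpn_def vadd_def)
  have fin: "finite (V4 p n)" using finite_Fpn by simp
  have "card (zv p w ` V4 p n) = card (V4 p n)"
    using zv_inj[OF assms(1)] by (simp add: card_image)
  then have img: "zv p w ` V4 p n = V4 p n" using sub fin by (simp add: card_subset_eq)
  have "sum g (zv p w ` V4 p n) = (\<Sum>d\<in>V4 p n. g (zv p w d))"
    using sum.reindex[OF zv_inj[OF assms(1)], of g w] by (simp add: comp_def)
  then show ?thesis using img by simp
qed


lemma zv_zp: "zcong n (int p) (zv p w d) (zp w d)"
  by (cases w; cases d) (simp add: zcong_def zv_def zp_def vadd_def vp_def)

lemma two_beta: "2 * beta n N w d = (case w of (x, h1, h2, h3) \<Rightarrow>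
   dt n x (\<lambda>i. 2 * GG n N d 0 i) + dt n h1 (\<lambda>i. 2 * GG n N d 1 i)
   + dt n h2 (\<lambda>i. 2 * GG n N d 2 i) + dt n h3 (\<lambda>i. 2 * GG n N d 3 i))"
  by (cases w) (simp add: beta_def dt_def sum_distrib_left algebra_simps)

lemma beta_char: assumes "p > 0"
  shows "(\<Sum>w\<in>V4 p n. om p (2 * beta n N w d)) =
     (if \<forall>s<4. \<forall>i<n. int p dvd 2 * GG n N d s i then of_nat p ^ (4 * n) else 0)"
proof -
  define F where "F s v = om p (dt n v (\<lambda>i. 2 * GG n N d s i))" for s v
  let ?c = "\<lambda>s. \<Sum>x\<in>Fpn p n. F s x"
  have e1: "(\<Sum>w\<in>V4 p n. om p (2 * beta n N w d)) =
     (\<Sum>x\<in>Fpn p n. \<Sum>h1\<in>Fpn p n. \<Sum>h2\<in>Fpn p n. \<Sum>h3\<in>Fpn p n. F 0 x * F 1 h1 * F 2 h2 * F 3 h3)"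
    unfolding sum4 two_beta F_def by (simp add: om_add)
  have e2: "\<dots> = ?c 0 * ?c 1 * ?c 2 * ?c 3"
    by (simp add: sum_distrib_left[symmetric] sum_distrib_right[symmetric] mult.assoc)
  have cs: "?c s = (if \<forall>i<n. int p dvd 2 * GG n N d s i then of_nat p ^ n else 0)" for s
    unfolding F_def by (rule char_V[OF assms])
  have a: "(\<forall>s<4. P s) \<longleftrightarrow> P 0 \<and> P 1 \<and> P 2 \<and> P (3::nat)" for P
    by (auto simp: less_Suc_eq numeral_eq_Suc)
  have e3: "?c 0 * ?c 1 * ?c 2 * ?c 3 = (if \<forall>s<4. \<forall>i<n. int p dvd 2 * GG n N d s i then of_nat p ^ (4 * n) else 0)"
  proof -
    have nn: "n + (n + (n + n)) = n * (4::nat)" by simp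
    show ?thesis unfolding cs a by (auto simp: power_add[symmetric] mult_ac nn)
  qed
  show ?thesis using e1 e2 e3 by simp
qed



lemma square_bound:
  assumes p: "p > 0" and sym: "\<And>k. symmetric_mat n (N k)"
  shows "(norm (\<Sum>z\<in>V4 p n. om p (PhiL n U z + PhiQ n N z)))^2
     \<le> real p ^ (4 * n) * real (card {d\<in>V4 p n. \<forall>s<4. \<forall>i<n. int p dvd 2 * GG n N d s i})"
proof -
  define \<Phi> where "\<Phi> z = PhiL n U z + PhiQ n N z" for z
  define S where "S = (\<Sum>z\<in>V4 p n. om p (\<Phi> z))"
  define K where "K = {d\<in>V4 p n. \<forall>s<4. \<forall>i<n. int p dvd 2 * GG n N d s i}"
  have fin: "finite (V4 p n)" using finite_Fpn by simp
  have "S * cnj S = (\<Sum>z\<in>V4 p n. \<Sum>w\<in>V4 p n. om p (\<Phi> z) * om p (- \<Phi> w))"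
    unfolding S_def by (simp add: om_cnj sum_product)
  also have "\<dots> = (\<Sum>w\<in>V4 p n. \<Sum>z\<in>V4 p n. om p (\<Phi> z - \<Phi> w))"
    by (subst sum.swap) (simp add: om_add[symmetric])
  also have "\<dots> = (\<Sum>w\<in>V4 p n. \<Sum>d\<in>V4 p n. om p (\<Phi> d) * om p (2 * beta n N w d))"
  proof (rule sum.cong[OF refl])
    fix w assume w: "w \<in> V4 p n"
    have "(\<Sum>z\<in>V4 p n. om p (\<Phi> z - \<Phi> w)) = (\<Sum>d\<in>V4 p n. om p (\<Phi> (zv p w d) - \<Phi> w))"
      using zv_sum[OF p w, of "\<lambda>z. om p (\<Phi> z - \<Phi> w)"] by simp
    also have "\<dots> = (\<Sum>d\<in>V4 p n. om p (\<Phi> d) * om p (2 * beta n N w d))"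
    proof (rule sum.cong[OF refl])
      fix d
      have m: "\<Phi> (zv p w d) mod int p = \<Phi> (zp w d) mod int p"
        unfolding \<Phi>_def by (rule Phi_mod[OF zv_zp])
      have e: "\<Phi> (zp w d) = \<Phi> w + \<Phi> d + 2 * beta n N w d"
        unfolding \<Phi>_def PhiL_add PhiQ_add[OF sym] by simp
      have "int p dvd ((\<Phi> (zv p w d) - \<Phi> w) - (\<Phi> d + 2 * beta n N w d))"
        using m e by (simp add: mod_eq_dvd_iff diff_diff_eq add.assoc)
      then have "om p (\<Phi> (zv p w d) - \<Phi> w) = om p (\<Phi> d + 2 * beta n N w d)"
        by (rule om_dvd[OF p])
      then show "om p (\<Phi> (zv p w d) - \<Phi> w) = om p (\<Phi> d) * om p (2 * beta n N w d)"
        by (simp add: om_add)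
    qed
    finally show "(\<Sum>z\<in>V4 p n. om p (\<Phi> z - \<Phi> w)) = (\<Sum>d\<in>V4 p n. om p (\<Phi> d) * om p (2 * beta n N w d))" .
  qed
  also have "\<dots> = (\<Sum>d\<in>V4 p n. om p (\<Phi> d) * (\<Sum>w\<in>V4 p n. om p (2 * beta n N w d)))"
    by (subst sum.swap) (simp add: sum_distrib_left)
  also have "\<dots> = (\<Sum>d\<in>V4 p n. om p (\<Phi> d) * (if d \<in> K then of_nat p ^ (4 * n) else 0))"
    unfolding beta_char[OF p] K_def by simp
  finally have SS: "S * cnj S = (\<Sum>d\<in>V4 p n. om p (\<Phi> d) * (if d \<in> K then of_nat p ^ (4 * n) else 0))" .
  have "norm S ^ 2 = norm (S * cnj S)"
    by (metis complex_norm_square norm_of_real norm_ge_zero abs_of_nonneg zero_le_power)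
  also have "\<dots> \<le> (\<Sum>d\<in>V4 p n. norm (om p (\<Phi> d) * (if d \<in> K then of_nat p ^ (4 * n) else 0)))"
    unfolding SS by (rule norm_sum)
  also have "\<dots> = (\<Sum>d\<in>V4 p n. (if d \<in> K then real p ^ (4 * n) else 0))"
    by (intro sum.cong refl) (simp add: norm_mult norm_power)
  also have "\<dots> = real p ^ (4 * n) * real (card K)"
  proof -
    have "K = {d \<in> V4 p n. d \<in> K}" unfolding K_def by auto
    then have "(\<Sum>d\<in>K. real p ^ (4 * n)) = (\<Sum>d\<in>V4 p n. (if d \<in> K then real p ^ (4 * n) else 0))"
      using sum.inter_filter[OF fin, of "\<lambda>_. real p ^ (4 * n)" "\<lambda>d. d \<in> K"] by simp
    then show ?thesis by (simp add: mult.commute)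
  qed
  finally show ?thesis unfolding S_def K_def \<Phi>_def .
qed



lemma dvd2: assumes "prime p" "odd p" "int p dvd 2 * x" shows "int p dvd x"
proof -
  have pi: "prime (int p)" using assms(1) by simp
  have "\<not> int p dvd 2"
  proof
    assume "int p dvd 2"
    then have "p dvd 2" by (metis int_dvd_int_iff of_nat_numeral)
    then have "p \<le> 2" by (simp add: dvd_imp_le)
    moreover have "p \<ge> 2" using assms(1) by (simp add: prime_ge_2_nat)
    ultimately have "p = 2" by simp
    then show False using assms(2) by simp
  qed
  then show ?thesis using prime_dvd_mult_iff[OF pi, of 2 x] assms(3) by simp
qed

lemma mv_diff: "mv n N v i - mv n N v' i = (\<Sum>k<n. N i k * (v k - v' k))"
  by (simp add: mv_def sum_subtractf right_diff_distrib)

lemma rankK: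
  fixes N :: "nat \<Rightarrow> nat \<Rightarrow> int" and c :: vec
  assumes pr: "prime p" and od: "odd p" and S: "S \<subseteq> {..<n}"
    and li: "lin_indep_Fp p n S (\<lambda>k i. N i k mod int p)"
  shows "card {v\<in>Fpn p n. \<forall>i<n. int p dvd 2 * (mv n N v i + c i)} * p ^ card S \<le> p ^ n"
proof -
  define T where "T = {v\<in>Fpn p n. \<forall>i<n. int p dvd 2 * (mv n N v i + c i)}"
  define W where "W = box p S"
  have p0: "p > 0" using pr prime_gt_0_nat by blast
  have finS: "finite S" using S finite_subset by blast
  have inj: "inj_on (\<lambda>(v, u). vadd p v u) (T \<times> W)"
  proof (rule inj_onI, clarify)
    fix v u v' u' assume v: "v \<in> T" and u: "u \<in> W" and v': "v' \<in> T" and u': "u' \<in> W"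
      and eq: "vadd p v u = vadd p v' u'"
    have e1: "(v i + u i) mod int p = (v' i + u' i) mod int p" for i
      using eq by (simp add: vadd_def fun_eq_iff)
    have ck: "(v k - v' k) mod int p = (u' k - u k) mod int p" for k
    proof -
      have "int p dvd (v k + u k) - (v' k + u' k)" using e1[of k] by (simp add: mod_eq_dvd_iff)
      then have "int p dvd (v k - v' k) - (u' k - u k)" by (simp add: algebra_simps)
      then show ?thesis by (simp add: mod_eq_dvd_iff)
    qed
    have dT: "int p dvd (\<Sum>k<n. N i k * (v k - v' k))" if i: "i < n" for i
    proof -
      have a: "int p dvd 2 * (mv n N v i + c i)" "int p dvd 2 * (mv n N v' i + c i)"
        using v v' i by (auto simp: T_def)
      have "int p dvd 2 * (mv n N v i + c i) - 2 * (mv n N v' i + c i)"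
        using a by (rule dvd_diff)
      then have "int p dvd 2 * (mv n N v i - mv n N v' i)" by (simp add: algebra_simps)
      then show ?thesis using dvd2[OF pr od] mv_diff by metis
    qed
    have uS: "u k = 0" "u' k = 0" if "k \<notin> S" for k
      using u u' that by (auto simp: W_def box_def)
    define e where "e k = (u' k - u k) mod int p" for k
    have "(\<forall>k\<in>S. 0 \<le> e k \<and> e k < int p) \<and> (\<forall>i<n. (\<Sum>k\<in>S. e k * (N i k mod int p)) mod int p = 0)"
    proof (intro conjI allI impI ballI)
      fix k show "0 \<le> e k" "e k < int p" using p0 by (auto simp: e_def)
    next
      fix i assume i: "i < n"
      have "(\<Sum>k\<in>S. e k * (N i k mod int p)) mod int p = (\<Sum>k\<in>S. N i k * (u' k - u k)) mod int p"
        by (rule mod_sum_cong) (metis e_def mod_mult_eq mult.commute)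
      also have "(\<Sum>k\<in>S. N i k * (u' k - u k)) = (\<Sum>k<n. N i k * (u' k - u k))"
        by (rule sum.mono_neutral_left) (use S uS in auto)
      also have "\<dots> mod int p = (\<Sum>k<n. N i k * (v k - v' k)) mod int p"
        by (rule mod_sum_cong) (metis ck mod_mult_right_eq)
      also have "\<dots> = 0" using dT[OF i] by simp
      finally show "(\<Sum>k\<in>S. e k * (N i k mod int p)) mod int p = 0" .
    qed
    then have "\<forall>k\<in>S. e k = 0" using li unfolding lin_indep_Fp_def by blast
    then have uu: "u = u'"
    proof -
      assume z: "\<forall>k\<in>S. e k = 0"
      show "u = u'"
      proof
        fix k show "u k = u' k"
        proof (cases "k \<in> S")
          case True
          then have "(u' k - u k) mod int p = 0" using z by (simp add: e_def)
          then have "u' k mod int p = u k mod int p" by (simp add: mod_eq_dvd_iff dvd_eq_mod_eq_0[symmetric])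
          then show ?thesis using u u' True by (simp add: W_def box_def)
        next
          case False then show ?thesis using uS by simp
        qed
      qed
    qed
    have "v = v'"
    proof
      fix i show "v i = v' i"
      proof (cases "i < n")
        case True
        have "(v i - v' i) mod int p = 0" using ck[of i] uu by simp
        then have "v i mod int p = v' i mod int p" by (simp add: mod_eq_dvd_iff dvd_eq_mod_eq_0[symmetric])
        then show ?thesis using v v' True by (simp add: T_def Fpn_def)
      next
        case False then show ?thesis using v v' by (simp add: T_def Fpn_def)
      qed
    qed
    then show "v = v' \<and> u = u'" using uu by simp
  qed
  have img: "(\<lambda>(v, u). vadd p v u) ` (T \<times> W) \<subseteq> Fpn p n"
  proof (clarsimp simp: T_def W_def Fpn_def box_def vadd_def p0)
    fix b :: vec and i assume "\<forall>i. i \<notin> S \<longrightarrow> b i = 0" "n \<le> i"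
    moreover have "i \<notin> S" using S \<open>n \<le> i\<close> by auto
    ultimately show "b i mod int p = 0" by simp
  qed
  have "card (T \<times> W) \<le> card (Fpn p n)"
    by (rule card_inj_on_le[OF inj img finite_Fpn])
  then show ?thesis
    by (simp add: card_cartesian_product W_def box_card[OF finS] card_Fpn T_def)
qed



lemma K_bound:
  fixes pick :: "quad \<Rightarrow> vec" and rest :: "quad \<Rightarrow> 'r" and c :: "'r \<Rightarrow> vec"
  assumes pr: "prime p" and od: "odd p" and S: "S \<subseteq> {..<n}"
    and li: "lin_indep_Fp p n S (\<lambda>k i. M i k mod int p)"
    and inj: "inj_on (\<lambda>d. (pick d, rest d)) K"
    and rest: "rest ` K \<subseteq> R" and finR: "finite R" and cardR: "card R = p ^ (3 * n)"
    and pick: "pick ` K \<subseteq> Fpn p n"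
    and cond: "\<And>d i. d \<in> K \<Longrightarrow> i < n \<Longrightarrow> int p dvd 2 * (mv n M (pick d) i + c (rest d) i)"
  shows "card K * p ^ card S \<le> p ^ (4 * n)"
proof -
  define F where "F r = {d\<in>K. rest d = r}" for r
  define T where "T r = {v\<in>Fpn p n. \<forall>i<n. int p dvd 2 * (mv n M v i + c r i)}" for r
  have KU: "K = (\<Union>r\<in>R. F r)" using rest by (auto simp: F_def)
  have Fb: "card (F r) * p ^ card S \<le> p ^ n" for r
  proof -
    have "inj_on pick (F r)"
      using inj unfolding inj_on_def F_def by auto
    moreover have "pick ` F r \<subseteq> T r" using pick cond by (auto simp: F_def T_def)
    moreover have "finite (T r)" using finite_Fpn by (simp add: T_def)
    ultimately have "card (F r) \<le> card (T r)" by (rule card_inj_on_le)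
    then have "card (F r) * p ^ card S \<le> card (T r) * p ^ card S" by simp
    also have "\<dots> \<le> p ^ n" unfolding T_def by (rule rankK[OF pr od S li])
    finally show ?thesis .
  qed
  have "card K * p ^ card S \<le> (\<Sum>r\<in>R. card (F r)) * p ^ card S"
    unfolding KU[symmetric] using card_UN_le[OF finR, of F] KU by simp
  also have "\<dots> = (\<Sum>r\<in>R. card (F r) * p ^ card S)" by (simp add: sum_distrib_right)
  also have "\<dots> \<le> (\<Sum>r\<in>R. p ^ n)" by (rule sum_mono) (rule Fb)
  also have "\<dots> = p ^ (3 * n) * p ^ n" using cardR by simp
  also have "\<dots> = p ^ (4 * n)"
  proof -
    have "4 * n = 3 * n + n" by simp
    then show ?thesis by (simp only: power_add)
  qed
  finally show ?thesis .
qed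

definition KK :: "nat \<Rightarrow> nat \<Rightarrow> (nat \<Rightarrow> nat \<Rightarrow> nat \<Rightarrow> int) \<Rightarrow> quad set" where
  "KK p n N = {d\<in>V4 p n. \<forall>s<4. \<forall>i<n. int p dvd 2 * GG n N d s i}"

lemma card_V3: "card (Fpn p n \<times> Fpn p n \<times> Fpn p n) = p ^ (3 * n)"
proof -
  show ?thesis by (simp add: card_cartesian_product card_Fpn numeral_3_eq_3 power_add)
qed

lemma Kcard:
  assumes pr: "prime p" and od: "odd p" and s: "s < 7" and S: "S \<subseteq> {..<n}"
    and li: "lin_indep_Fp p n S (\<lambda>k i. N s i k mod int p)"
  shows "card (KK p n N) * p ^ card S \<le> p ^ (4 * n)"
proof -
  let ?V3 = "Fpn p n \<times> Fpn p n \<times> Fpn p n"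
  have fin3: "finite ?V3" using finite_Fpn by simp
  have KV: "KK p n N \<subseteq> V4 p n" by (auto simp: KK_def)
  have Kc: "\<And>d i r. d \<in> KK p n N \<Longrightarrow> i < n \<Longrightarrow> r < 4 \<Longrightarrow> int p dvd 2 * GG n N d r i"
    by (auto simp: KK_def)
  define pk0 :: "quad \<Rightarrow> vec" where "pk0 d = (case d of (d0, d1, d2, d3) \<Rightarrow> d0)" for d
  define pk1 :: "quad \<Rightarrow> vec" where "pk1 d = (case d of (d0, d1, d2, d3) \<Rightarrow> d1)" for d
  define pk2 :: "quad \<Rightarrow> vec" where "pk2 d = (case d of (d0, d1, d2, d3) \<Rightarrow> d2)" for d
  define pk3 :: "quad \<Rightarrow> vec" where "pk3 d = (case d of (d0, d1, d2, d3) \<Rightarrow> d3)" for d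
  define rs0 :: "quad \<Rightarrow> vec \<times> vec \<times> vec" where "rs0 d = (case d of (d0, d1, d2, d3) \<Rightarrow> (d1, d2, d3))" for d
  define rs1 :: "quad \<Rightarrow> vec \<times> vec \<times> vec" where "rs1 d = (case d of (d0, d1, d2, d3) \<Rightarrow> (d0, d2, d3))" for d
  define rs2 :: "quad \<Rightarrow> vec \<times> vec \<times> vec" where "rs2 d = (case d of (d0, d1, d2, d3) \<Rightarrow> (d0, d1, d3))" for d
  define rs3 :: "quad \<Rightarrow> vec \<times> vec \<times> vec" where "rs3 d = (case d of (d0, d1, d2, d3) \<Rightarrow> (d0, d1, d2))" for d
  have inj0: "inj_on (\<lambda>d. (pk0 d, rs0 d)) (KK p n N)" by (auto simp: inj_on_def pk0_def rs0_def split: prod.splits)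
  have inj1: "inj_on (\<lambda>d. (pk1 d, rs1 d)) (KK p n N)" by (auto simp: inj_on_def pk1_def rs1_def split: prod.splits)
  have inj2: "inj_on (\<lambda>d. (pk2 d, rs2 d)) (KK p n N)" by (auto simp: inj_on_def pk2_def rs2_def split: prod.splits)
  have inj3: "inj_on (\<lambda>d. (pk3 d, rs3 d)) (KK p n N)" by (auto simp: inj_on_def pk3_def rs3_def split: prod.splits)
  have r0: "rs0 ` KK p n N \<subseteq> ?V3" using KV by (auto simp: rs0_def)
  have r1: "rs1 ` KK p n N \<subseteq> ?V3" using KV by (auto simp: rs1_def)
  have r2: "rs2 ` KK p n N \<subseteq> ?V3" using KV by (auto simp: rs2_def)
  have r3: "rs3 ` KK p n N \<subseteq> ?V3" using KV by (auto simp: rs3_def)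
  have p0: "pk0 ` KK p n N \<subseteq> Fpn p n" using KV by (auto simp: pk0_def)
  have p1: "pk1 ` KK p n N \<subseteq> Fpn p n" using KV by (auto simp: pk1_def)
  have p2: "pk2 ` KK p n N \<subseteq> Fpn p n" using KV by (auto simp: pk2_def)
  have p3: "pk3 ` KK p n N \<subseteq> Fpn p n" using KV by (auto simp: pk3_def)
  note B = K_bound[OF pr od S li _ _ fin3 card_V3]
  have "s = 0 \<or> s = 1 \<or> s = 2 \<or> s = 3 \<or> s = 4 \<or> s = 5 \<or> s = 6" using s by auto
  then show ?thesis
  proof (elim disjE)
    assume ss: "s = 0"
    define c :: "vec \<times> vec \<times> vec \<Rightarrow> vec" where
      "c r = (case r of (d1, d2, d3) \<Rightarrow> (\<lambda>i. mv n (N 1) d1 i + mv n (N 2) d2 i + mv n (N 3) d3 i))" for r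
    show ?thesis
    proof (intro B[OF inj0 r0 p0, of c], goal_cases)
      case (1 d i)
      have "GG n N d 0 i = mv n (N s) (pk0 d) i + c (rs0 d) i"
        using ss by (cases d) (simp add: GG_def vp_def pk0_def rs0_def c_def)
      then show ?case using Kc[OF 1(1,2), of 0] by simp
    qed
  next
    assume ss: "s = 1"
    define c :: "vec \<times> vec \<times> vec \<Rightarrow> vec" where
      "c r = (case r of (d0, d2, d3) \<Rightarrow> (\<lambda>i. mv n (N 1) d0 i + mv n (N 4) d2 i + mv n (N 5) d3 i))" for r
    show ?thesis
    proof (intro B[OF inj1 r1 p1, of c], goal_cases)
      case (1 d i)
      have "GG n N d 1 i = mv n (N s) (pk1 d) i + c (rs1 d) i"
        using ss by (cases d) (simp add: GG_def vp_def pk1_def rs1_def c_def)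
      then show ?case using Kc[OF 1(1,2), of 1] by simp
    qed
  next
    assume ss: "s = 2"
    define c :: "vec \<times> vec \<times> vec \<Rightarrow> vec" where
      "c r = (case r of (d0, d1, d3) \<Rightarrow> (\<lambda>i. mv n (N 2) d0 i + mv n (N 4) d1 i + mv n (N 6) d3 i))" for r
    show ?thesis
    proof (intro B[OF inj2 r2 p2, of c], goal_cases)
      case (1 d i)
      have "GG n N d 2 i = mv n (N s) (pk2 d) i + c (rs2 d) i"
        using ss by (cases d) (simp add: GG_def vp_def pk2_def rs2_def c_def)
      then show ?case using Kc[OF 1(1,2), of 2] by simp
    qed
  next
    assume ss: "s = 3"
    define c :: "vec \<times> vec \<times> vec \<Rightarrow> vec" where
      "c r = (case r of (d0, d1, d2) \<Rightarrow> (\<lambda>i. mv n (N 3) d0 i + mv n (N 5) d1 i + mv n (N 6) d2 i))" for r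
    show ?thesis
    proof (intro B[OF inj3 r3 p3, of c], goal_cases)
      case (1 d i)
      have "GG n N d 3 i = mv n (N s) (pk3 d) i + c (rs3 d) i"
        using ss by (cases d) (simp add: GG_def vp_def pk3_def rs3_def c_def)
      then show ?case using Kc[OF 1(1,2), of 3] by simp
    qed
  next
    assume ss: "s = 4"
    define c :: "vec \<times> vec \<times> vec \<Rightarrow> vec" where
      "c r = (case r of (d0, d1, d3) \<Rightarrow> (\<lambda>i. mv n (N 1) d0 i + mv n (N 1) d1 i + mv n (N 5) d3 i))" for r
    show ?thesis
    proof (intro B[OF inj2 r2 p2, of c], goal_cases)
      case (1 d i)
      have "GG n N d 1 i = mv n (N s) (pk2 d) i + c (rs2 d) i"
        using ss by (cases d) (simp add: GG_def vp_def pk2_def rs2_def c_def)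
      then show ?case using Kc[OF 1(1,2), of 1] by simp
    qed
  next
    assume ss: "s = 5"
    define c :: "vec \<times> vec \<times> vec \<Rightarrow> vec" where
      "c r = (case r of (d0, d1, d2) \<Rightarrow> (\<lambda>i. mv n (N 1) d0 i + mv n (N 1) d1 i + mv n (N 4) d2 i))" for r
    show ?thesis
    proof (intro B[OF inj3 r3 p3, of c], goal_cases)
      case (1 d i)
      have "GG n N d 1 i = mv n (N s) (pk3 d) i + c (rs3 d) i"
        using ss by (cases d) (simp add: GG_def vp_def pk3_def rs3_def c_def)
      then show ?case using Kc[OF 1(1,2), of 1] by simp
    qed
  next
    assume ss: "s = 6"
    define c :: "vec \<times> vec \<times> vec \<Rightarrow> vec" where
      "c r = (case r of (d0, d1, d2) \<Rightarrow> (\<lambda>i. mv n (N 2) d0 i + mv n (N 2) d2 i + mv n (N 4) d1 i))" for r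
    show ?thesis
    proof (intro B[OF inj3 r3 p3, of c], goal_cases)
      case (1 d i)
      have "GG n N d 2 i = mv n (N s) (pk3 d) i + c (rs3 d) i"
        using ss by (cases d) (simp add: GG_def vp_def pk3_def rs3_def c_def)
      then show ?case using Kc[OF 1(1,2), of 2] by simp
    qed
  qed
qed



lemma lin8:
  fixes A B1 B2 B3 a m :: int
  shows "(\<forall>w1 w2 w3. m dvd A + of_bool w1 * B1 + of_bool w2 * B2 + of_bool w3 * B3 - a)
     \<longleftrightarrow> m dvd A - a \<and> m dvd B1 \<and> m dvd B2 \<and> m dvd B3"
proof
  assume H: "\<forall>w1 w2 w3. m dvd A + of_bool w1 * B1 + of_bool w2 * B2 + of_bool w3 * B3 - a"
  have h0: "m dvd A - a" using H[rule_format, of False False False] by simp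
  have h1: "m dvd A + B1 - a" using H[rule_format, of True False False] by simp
  have h2: "m dvd A + B2 - a" using H[rule_format, of False True False] by simp
  have h3: "m dvd A + B3 - a" using H[rule_format, of False False True] by simp
  have "m dvd (A + B1 - a) - (A - a)" "m dvd (A + B2 - a) - (A - a)" "m dvd (A + B3 - a) - (A - a)"
    using dvd_diff[OF h1 h0] dvd_diff[OF h2 h0] dvd_diff[OF h3 h0] by auto
  then show "m dvd A - a \<and> m dvd B1 \<and> m dvd B2 \<and> m dvd B3" using h0 by simp
next
  assume "m dvd A - a \<and> m dvd B1 \<and> m dvd B2 \<and> m dvd B3"
  then have H: "m dvd A - a" "m dvd B1" "m dvd B2" "m dvd B3" by auto
  show "\<forall>w1 w2 w3. m dvd A + of_bool w1 * B1 + of_bool w2 * B2 + of_bool w3 * B3 - a"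
  proof (intro allI)
    fix w1 w2 w3
    have "m dvd (A - a) + of_bool w1 * B1 + of_bool w2 * B2 + of_bool w3 * B3"
      using H by (intro dvd_add dvd_mult) auto
    then show "m dvd A + of_bool w1 * B1 + of_bool w2 * B2 + of_bool w3 * B3 - a"
      by (simp add: algebra_simps)
  qed
qed

lemma quad8:
  fixes A B1 B2 B3 C12 C13 C23 b m :: int
  shows "(\<forall>w1 w2 w3. m dvd A + of_bool w1 * B1 + of_bool w2 * B2 + of_bool w3 * B3
            + of_bool (w1 \<and> w2) * C12 + of_bool (w1 \<and> w3) * C13 + of_bool (w2 \<and> w3) * C23 - b)
     \<longleftrightarrow> m dvd A - b \<and> m dvd B1 \<and> m dvd B2 \<and> m dvd B3 \<and> m dvd C12 \<and> m dvd C13 \<and> m dvd C23"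
proof
  assume H: "\<forall>w1 w2 w3. m dvd A + of_bool w1 * B1 + of_bool w2 * B2 + of_bool w3 * B3
            + of_bool (w1 \<and> w2) * C12 + of_bool (w1 \<and> w3) * C13 + of_bool (w2 \<and> w3) * C23 - b"
  have h0: "m dvd A - b" using H[rule_format, of False False False] by simp
  have h1: "m dvd A + B1 - b" using H[rule_format, of True False False] by simp
  have h2: "m dvd A + B2 - b" using H[rule_format, of False True False] by simp
  have h3: "m dvd A + B3 - b" using H[rule_format, of False False True] by simp
  have h12: "m dvd A + B1 + B2 + C12 - b" using H[rule_format, of True True False] by simp
  have h13: "m dvd A + B1 + B3 + C13 - b" using H[rule_format, of True False True] by simp
  have h23: "m dvd A + B2 + B3 + C23 - b" using H[rule_format, of False True True] by simp
  have d1: "m dvd B1" using dvd_diff[OF h1 h0] by simp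
  have d2: "m dvd B2" using dvd_diff[OF h2 h0] by simp
  have d3: "m dvd B3" using dvd_diff[OF h3 h0] by simp
  have "m dvd (A + B1 + B2 + C12 - b) - (A - b) - B1 - B2"
    using dvd_diff[OF dvd_diff[OF dvd_diff[OF h12 h0] d1] d2] .
  then have c12: "m dvd C12" by (simp add: algebra_simps)
  have "m dvd (A + B1 + B3 + C13 - b) - (A - b) - B1 - B3"
    using dvd_diff[OF dvd_diff[OF dvd_diff[OF h13 h0] d1] d3] .
  then have c13: "m dvd C13" by (simp add: algebra_simps)
  have "m dvd (A + B2 + B3 + C23 - b) - (A - b) - B2 - B3"
    using dvd_diff[OF dvd_diff[OF dvd_diff[OF h23 h0] d2] d3] .
  then have c23: "m dvd C23" by (simp add: algebra_simps)
  show "m dvd A - b \<and> m dvd B1 \<and> m dvd B2 \<and> m dvd B3 \<and> m dvd C12 \<and> m dvd C13 \<and> m dvd C23"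
    using h0 d1 d2 d3 c12 c13 c23 by simp
next
  assume "m dvd A - b \<and> m dvd B1 \<and> m dvd B2 \<and> m dvd B3 \<and> m dvd C12 \<and> m dvd C13 \<and> m dvd C23"
  then have H: "m dvd A - b" "m dvd B1" "m dvd B2" "m dvd B3" "m dvd C12" "m dvd C13" "m dvd C23" by auto
  show "\<forall>w1 w2 w3. m dvd A + of_bool w1 * B1 + of_bool w2 * B2 + of_bool w3 * B3
            + of_bool (w1 \<and> w2) * C12 + of_bool (w1 \<and> w3) * C13 + of_bool (w2 \<and> w3) * C23 - b"
  proof (intro allI)
    fix w1 w2 w3
    have "m dvd (A - b) + of_bool w1 * B1 + of_bool w2 * B2 + of_bool w3 * B3
            + of_bool (w1 \<and> w2) * C12 + of_bool (w1 \<and> w3) * C13 + of_bool (w2 \<and> w3) * C23"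
      using H by (intro dvd_add dvd_mult) auto
    then show "m dvd A + of_bool w1 * B1 + of_bool w2 * B2 + of_bool w3 * B3
            + of_bool (w1 \<and> w2) * C12 + of_bool (w1 \<and> w3) * C13 + of_bool (w2 \<and> w3) * C23 - b"
      by (simp add: algebra_simps)
  qed
qed

lemma qf_addL: "qf n M (\<lambda>i. u i + v i) w = qf n M u w + qf n M v w"
  by (simp add: qf_def algebra_simps sum.distrib)
lemma qf_addR: "qf n M w (\<lambda>i. u i + v i) = qf n M w u + qf n M w v"
  by (simp add: qf_def algebra_simps sum.distrib)
lemma qf_scL: "qf n M (\<lambda>i. c * u i) w = c * qf n M u w"
  by (simp add: qf_def algebra_simps sum_distrib_left)
lemma qf_scR: "qf n M w (\<lambda>i. c * u i) = c * qf n M w u"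
  by (simp add: qf_def algebra_simps sum_distrib_left)
lemma qf_sym: "symmetric_mat n M \<Longrightarrow> qf n M u v = qf n M v u"
  using dt_mv_sym by (simp add: qf_mv)

lemma qf_comb:
  assumes sym: "symmetric_mat n M"
  shows "qf n M (\<lambda>i. x i + of_bool w1 * h1 i + of_bool w2 * h2 i + of_bool w3 * h3 i)
                (\<lambda>i. x i + of_bool w1 * h1 i + of_bool w2 * h2 i + of_bool w3 * h3 i)
   = qf n M x x + of_bool w1 * (2 * qf n M x h1 + qf n M h1 h1) + of_bool w2 * (2 * qf n M x h2 + qf n M h2 h2)
     + of_bool w3 * (2 * qf n M x h3 + qf n M h3 h3)
     + of_bool (w1 \<and> w2) * (2 * qf n M h1 h2) + of_bool (w1 \<and> w3) * (2 * qf n M h1 h3)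
     + of_bool (w2 \<and> w3) * (2 * qf n M h2 h3)"
proof -
  note s = qf_sym[OF sym, of h1 x] qf_sym[OF sym, of h2 x] qf_sym[OF sym, of h3 x]
     qf_sym[OF sym, of h2 h1] qf_sym[OF sym, of h3 h1] qf_sym[OF sym, of h3 h2]
  show ?thesis
    by (cases w1; cases w2; cases w3) (simp_all add: qf_addL qf_addR qf_scL qf_scR s algebra_simps)
qed

lemma dt_comb: "dt n (\<lambda>i. x i + of_bool w1 * h1 i + of_bool w2 * h2 i + of_bool w3 * h3 i) r
   = dt n x r + of_bool w1 * dt n h1 r + of_bool w2 * dt n h2 r + of_bool w3 * dt n h3 r"
  by (simp add: dt_def algebra_simps sum.distrib sum_distrib_left)

lemma P_mod: "vadd p (vadd p (vadd p x (if w1 then h1 else (\<lambda>_. 0))) (if w2 then h2 else (\<lambda>_. 0)))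
     (if w3 then h3 else (\<lambda>_. 0)) i mod int p
   = (x i + of_bool w1 * h1 i + of_bool w2 * h2 i + of_bool w3 * h3 i) mod int p"
  by (cases w1; cases w2; cases w3) (simp_all add: vadd_def mod_simps)



definition uvec :: "vec list \<Rightarrow> nat \<times> nat \<times> nat \<Rightarrow> nat \<Rightarrow> vec" where
  "uvec rs j s' = (case j of (c, k, s) \<Rightarrow> if c = 0 \<and> s = s' then rs ! k else (\<lambda>_. 0))"

definition nmat :: "(nat \<Rightarrow> nat \<Rightarrow> int) list \<Rightarrow> nat \<times> nat \<times> nat \<Rightarrow> nat \<Rightarrow> nat \<Rightarrow> nat \<Rightarrow> int" where
  "nmat Ms j s' = (case j of (c, k, s) \<Rightarrow> if c = 1 \<and> s = s' then Ms ! k else (\<lambda>_ _. 0))"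

definition phi :: "nat \<Rightarrow> vec list \<Rightarrow> (nat \<Rightarrow> nat \<Rightarrow> int) list \<Rightarrow> nat \<times> nat \<times> nat \<Rightarrow> quad \<Rightarrow> int" where
  "phi n rs Ms j z = PhiL n (uvec rs j) z + PhiQ n (nmat Ms j) z"

definition JJ :: "nat \<Rightarrow> nat \<Rightarrow> (nat \<times> nat \<times> nat) set" where
  "JJ l q = ({0} \<times> {..<l} \<times> {..<4}) \<union> ({1} \<times> {..<q} \<times> {..<7})"

definition cc :: "int list \<Rightarrow> int list \<Rightarrow> nat \<times> nat \<times> nat \<Rightarrow> int" where
  "cc a b j = (case j of (c, k, s) \<Rightarrow> if s = 0 then (if c = 0 then a ! k else b ! k) else 0)"

lemma dt_zero[simp]: "dt n x (\<lambda>_. 0) = 0" by (simp add: dt_def)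
lemma qf_zero[simp]: "qf n (\<lambda>_ _. 0) x y = 0" by (simp add: qf_def)

lemma phi_lin:
  "phi n rs Ms (0, k, 0) (x, h1, h2, h3) = dt n x (rs ! k)"
  "phi n rs Ms (0, k, 1) (x, h1, h2, h3) = dt n h1 (rs ! k)"
  "phi n rs Ms (0, k, 2) (x, h1, h2, h3) = dt n h2 (rs ! k)"
  "phi n rs Ms (0, k, 3) (x, h1, h2, h3) = dt n h3 (rs ! k)"
  by (simp_all add: phi_def PhiL_def PhiQ_def uvec_def nmat_def)

lemma phi_quad:
  "phi n rs Ms (1, k, 0) (x, h1, h2, h3) = qf n (Ms ! k) x x"
  "phi n rs Ms (1, k, 1) (x, h1, h2, h3) = 2 * qf n (Ms ! k) x h1 + qf n (Ms ! k) h1 h1"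
  "phi n rs Ms (1, k, 2) (x, h1, h2, h3) = 2 * qf n (Ms ! k) x h2 + qf n (Ms ! k) h2 h2"
  "phi n rs Ms (1, k, 3) (x, h1, h2, h3) = 2 * qf n (Ms ! k) x h3 + qf n (Ms ! k) h3 h3"
  "phi n rs Ms (1, k, 4) (x, h1, h2, h3) = 2 * qf n (Ms ! k) h1 h2"
  "phi n rs Ms (1, k, 5) (x, h1, h2, h3) = 2 * qf n (Ms ! k) h1 h3"
  "phi n rs Ms (1, k, 6) (x, h1, h2, h3) = 2 * qf n (Ms ! k) h2 h3"
  by (simp_all add: phi_def PhiL_def PhiQ_def uvec_def nmat_def)

lemma all4: "(\<forall>s<4. P s) \<longleftrightarrow> P 0 \<and> P 1 \<and> P 2 \<and> P (3::nat)"
  apply (simp add: lessThan_nat_numeral lessThan_Suc flip: lessThan_iff) by blast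
lemma all7: "(\<forall>s<7. P s) \<longleftrightarrow> P 0 \<and> P 1 \<and> P 2 \<and> P 3 \<and> P 4 \<and> P 5 \<and> P (6::nat)"
  apply (simp add: lessThan_nat_numeral lessThan_Suc flip: lessThan_iff) by blast

lemma JJ_ball: "(\<forall>j\<in>JJ l q. P j) \<longleftrightarrow> (\<forall>k<l. \<forall>s<4. P (0, k, s)) \<and> (\<forall>k<q. \<forall>s<7. P (1, k, s))"
  unfolding JJ_def by (simp add: ball_Un lessThan_def)

lemma mod_eq_rng: assumes "0 \<le> a" "a < int p" shows "(s mod int p = a) \<longleftrightarrow> int p dvd s - a"
proof -
  have "a mod int p = a" using assms by simp
  then show ?thesis by (metis mod_eq_dvd_iff)
qed

lemma memB:
  assumes B: "B = {x \<in> Fpn p n. beta_factor p n rs Ms x = (a, b)}"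
    and la: "length a = length rs" and lb: "length b = length Ms"
    and ra: "set a \<subseteq> {0..<int p}" and rb: "set b \<subseteq> {0..<int p}"
  shows "y \<in> B \<longleftrightarrow> y \<in> Fpn p n \<and> (\<forall>k<length rs. int p dvd dt n y (rs ! k) - a ! k)
           \<and> (\<forall>k<length Ms. int p dvd qf n (Ms ! k) y y - b ! k)"
proof -
  have "beta_factor p n rs Ms y = (a, b) \<longleftrightarrow>
     (\<forall>k<length rs. dotp p n y (rs ! k) = a ! k) \<and> (\<forall>k<length Ms. bilin p n (Ms ! k) y y = b ! k)"
    using la lb by (auto simp: beta_factor_def list_eq_iff_nth_eq)
  also have "\<dots> \<longleftrightarrow> (\<forall>k<length rs. int p dvd dt n y (rs ! k) - a ! k)
           \<and> (\<forall>k<length Ms. int p dvd qf n (Ms ! k) y y - b ! k)"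
  proof -
    have A: "dotp p n y (rs ! k) = a ! k \<longleftrightarrow> int p dvd dt n y (rs ! k) - a ! k" if "k < length rs" for k
    proof -
      have "a ! k \<in> set a" using that la by simp
      then have "0 \<le> a ! k" "a ! k < int p" using ra by auto
      then show ?thesis unfolding dotp_def dt_def[symmetric] by (rule mod_eq_rng)
    qed
    have Bq: "bilin p n (Ms ! k) y y = b ! k \<longleftrightarrow> int p dvd qf n (Ms ! k) y y - b ! k" if "k < length Ms" for k
    proof -
      have "b ! k \<in> set b" using that lb by simp
      then have "0 \<le> b ! k" "b ! k < int p" using rb by auto
      then show ?thesis unfolding bilin_def qf_def[symmetric] by (rule mod_eq_rng)
    qed
    show ?thesis using A Bq by auto
  qed
  finally show ?thesis using B by auto
qed



lemma vadd_Fpn: "p > 0 \<Longrightarrow> x \<in> Fpn p n \<Longrightarrow> y \<in> Fpn p n \<Longrightarrow> vadd p x y \<in> Fpn p n"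
  by (simp add: Fpn_def vadd_def)

lemma zero_Fpn: "p > 0 \<Longrightarrow> (\<lambda>_. 0) \<in> Fpn p n"
  by (auto simp: Fpn_def)

lemma dvd_mod_cong: "s mod m = s' mod m \<Longrightarrow> (m dvd s - a) \<longleftrightarrow> (m dvd s' - (a::int))"
  by (simp add: mod_eq_dvd_iff[symmetric] mod_diff_left_eq[symmetric, of s] mod_diff_left_eq[symmetric, of s'])

lemma Omega_char:
  assumes p: "p > 0"
    and B: "B = {x \<in> Fpn p n. beta_factor p n rs Ms x = (a, b)}"
    and la: "length a = length rs" and lb: "length b = length Ms"
    and ra: "set a \<subseteq> {0..<int p}" and rb: "set b \<subseteq> {0..<int p}"
    and sym: "\<And>M. M \<in> set Ms \<Longrightarrow> symmetric_mat n M"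
  shows "Omega p n B = {z\<in>V4 p n. \<forall>j\<in>JJ (length rs) (length Ms). int p dvd phi n rs Ms j z - cc a b j}"
proof (rule set_eqI)
  fix z :: quad
  obtain x h1 h2 h3 where z: "z = (x, h1, h2, h3)" by (cases z) auto
  define P where "P w1 w2 w3 = vadd p (vadd p (vadd p x (if w1 then h1 else (\<lambda>_. 0))) (if w2 then h2 else (\<lambda>_. 0)))
     (if w3 then h3 else (\<lambda>_. 0))" for w1 w2 w3
  let ?L = "\<lambda>k w1 w2 w3. dt n x (rs ! k) + of_bool w1 * dt n h1 (rs ! k) + of_bool w2 * dt n h2 (rs ! k) + of_bool w3 * dt n h3 (rs ! k)"
  let ?Q = "\<lambda>k w1 w2 w3. qf n (Ms ! k) x x + of_bool w1 * (2 * qf n (Ms ! k) x h1 + qf n (Ms ! k) h1 h1)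
     + of_bool w2 * (2 * qf n (Ms ! k) x h2 + qf n (Ms ! k) h2 h2)
     + of_bool w3 * (2 * qf n (Ms ! k) x h3 + qf n (Ms ! k) h3 h3)
     + of_bool (w1 \<and> w2) * (2 * qf n (Ms ! k) h1 h2) + of_bool (w1 \<and> w3) * (2 * qf n (Ms ! k) h1 h3)
     + of_bool (w2 \<and> w3) * (2 * qf n (Ms ! k) h2 h3)"
  have inOm: "z \<in> Omega p n B \<longleftrightarrow> z \<in> V4 p n \<and> (\<forall>w1 w2 w3. P w1 w2 w3 \<in> B)"
    unfolding z Omega_def P_def by auto
  have key: "(\<forall>w1 w2 w3. P w1 w2 w3 \<in> B) \<longleftrightarrow>
       (\<forall>k<length rs. \<forall>w1 w2 w3. int p dvd ?L k w1 w2 w3 - a ! k) \<and>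
       (\<forall>k<length Ms. \<forall>w1 w2 w3. int p dvd ?Q k w1 w2 w3 - b ! k)" if zV: "z \<in> V4 p n"
  proof -
    have xV: "x \<in> Fpn p n" "h1 \<in> Fpn p n" "h2 \<in> Fpn p n" "h3 \<in> Fpn p n" using zV z by auto
    have PV: "P w1 w2 w3 \<in> Fpn p n" for w1 w2 w3
      unfolding P_def using xV zero_Fpn[OF p] by (intro vadd_Fpn[OF p]) auto
    have Pm: "\<And>i. P w1 w2 w3 i mod int p = (x i + of_bool w1 * h1 i + of_bool w2 * h2 i + of_bool w3 * h3 i) mod int p"
      for w1 w2 w3 unfolding P_def by (rule P_mod)
    have dl: "int p dvd dt n (P w1 w2 w3) (rs ! k) - a ! k \<longleftrightarrow> int p dvd ?L k w1 w2 w3 - a ! k" for k w1 w2 w3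
    proof -
      have "dt n (P w1 w2 w3) (rs ! k) mod int p = dt n (\<lambda>i. x i + of_bool w1 * h1 i + of_bool w2 * h2 i + of_bool w3 * h3 i) (rs ! k) mod int p"
        by (rule dt_mod) (rule Pm)
      then show ?thesis unfolding dt_comb by (rule dvd_mod_cong)
    qed
    have dq: "int p dvd qf n (Ms ! k) (P w1 w2 w3) (P w1 w2 w3) - b ! k \<longleftrightarrow> int p dvd ?Q k w1 w2 w3 - b ! k"
      if k: "k < length Ms" for k w1 w2 w3
    proof -
      have "qf n (Ms ! k) (P w1 w2 w3) (P w1 w2 w3) mod int p =
         qf n (Ms ! k) (\<lambda>i. x i + of_bool w1 * h1 i + of_bool w2 * h2 i + of_bool w3 * h3 i)
           (\<lambda>i. x i + of_bool w1 * h1 i + of_bool w2 * h2 i + of_bool w3 * h3 i) mod int p"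
        by (rule qf_mod) (rule Pm)+
      then show ?thesis unfolding qf_comb[OF sym[OF nth_mem[OF k]]] by (rule dvd_mod_cong)
    qed
    have "(\<forall>w1 w2 w3. P w1 w2 w3 \<in> B) \<longleftrightarrow> (\<forall>w1 w2 w3.
         (\<forall>k<length rs. int p dvd ?L k w1 w2 w3 - a ! k) \<and> (\<forall>k<length Ms. int p dvd ?Q k w1 w2 w3 - b ! k))"
      using memB[OF B la lb ra rb] PV dl dq by simp
    also have "\<dots> \<longleftrightarrow> (\<forall>k<length rs. \<forall>w1 w2 w3. int p dvd ?L k w1 w2 w3 - a ! k) \<and>
       (\<forall>k<length Ms. \<forall>w1 w2 w3. int p dvd ?Q k w1 w2 w3 - b ! k)"
      by blast
    finally show ?thesis .
  qed
  have rhs: "(\<forall>j\<in>JJ (length rs) (length Ms). int p dvd phi n rs Ms j z - cc a b j) \<longleftrightarrow>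
       (\<forall>k<length rs. \<forall>w1 w2 w3. int p dvd ?L k w1 w2 w3 - a ! k) \<and>
       (\<forall>k<length Ms. \<forall>w1 w2 w3. int p dvd ?Q k w1 w2 w3 - b ! k)"
    unfolding JJ_ball all4 all7 lin8 quad8 z phi_lin phi_quad by (simp add: cc_def)
  show "z \<in> Omega p n B \<longleftrightarrow> z \<in> {z\<in>V4 p n. \<forall>j\<in>JJ (length rs) (length Ms). int p dvd phi n rs Ms j z - cc a b j}"
  proof (cases "z \<in> V4 p n")
    case True
    show ?thesis unfolding inOm key[OF True] rhs[symmetric] using True by blast
  next
    case False
    then show ?thesis unfolding inOm by blast
  qed
qed



lemma dt_lin: "dt n x (\<lambda>i. \<Sum>j\<in>J. t j * f j i) = (\<Sum>j\<in>J. t j * dt n x (f j))"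
proof -
  have "dt n x (\<lambda>i. \<Sum>j\<in>J. t j * f j i) = (\<Sum>i<n. \<Sum>j\<in>J. t j * (x i * f j i))"
    by (simp add: dt_def sum_distrib_left mult_ac)
  also have "\<dots> = (\<Sum>j\<in>J. \<Sum>i<n. t j * (x i * f j i))" by (rule sum.swap)
  also have "\<dots> = (\<Sum>j\<in>J. t j * dt n x (f j))" by (simp add: dt_def sum_distrib_left)
  finally show ?thesis .
qed

lemma qf_lin: "qf n (\<lambda>i i'. \<Sum>j\<in>J. t j * g j i i') u v = (\<Sum>j\<in>J. t j * qf n (g j) u v)"
proof -
  have "qf n (\<lambda>i i'. \<Sum>j\<in>J. t j * g j i i') u v = (\<Sum>i<n. \<Sum>i'<n. \<Sum>j\<in>J. t j * (u i * g j i i' * v i'))"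
    by (simp add: qf_def sum_distrib_left sum_distrib_right mult_ac)
  also have "\<dots> = (\<Sum>i<n. \<Sum>j\<in>J. \<Sum>i'<n. t j * (u i * g j i i' * v i'))"
    by (intro sum.cong refl) (rule sum.swap)
  also have "\<dots> = (\<Sum>j\<in>J. \<Sum>i<n. \<Sum>i'<n. t j * (u i * g j i i' * v i'))" by (rule sum.swap)
  also have "\<dots> = (\<Sum>j\<in>J. t j * qf n (g j) u v)" by (simp add: qf_def sum_distrib_left)
  finally show ?thesis .
qed

lemma PhiL_lin: "PhiL n (\<lambda>s i. \<Sum>j\<in>J. t j * f j s i) z = (\<Sum>j\<in>J. t j * PhiL n (f j) z)"
  by (cases z) (simp add: PhiL_def dt_lin sum.distrib distrib_left)

lemma PhiQ_lin: "PhiQ n (\<lambda>s i i'. \<Sum>j\<in>J. t j * g j s i i') z = (\<Sum>j\<in>J. t j * PhiQ n (g j) z)"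
  by (cases z) (simp add: PhiQ_def qf_lin sum.distrib distrib_left sum_distrib_left mult_ac)

lemma phi_sum: "(\<Sum>j\<in>J. t j * phi n rs Ms j z) =
   PhiL n (\<lambda>s i. \<Sum>j\<in>J. t j * uvec rs j s i) z + PhiQ n (\<lambda>s i i'. \<Sum>j\<in>J. t j * nmat Ms j s i i') z"
  by (simp add: phi_def PhiL_lin PhiQ_lin distrib_left sum.distrib)

lemma finite_JJ: "finite (JJ l q)" by (simp add: JJ_def)

lemma card_JJ: "card (JJ l q) = 4 * l + 7 * q"
proof -
  have "card (JJ l q) = card ({0::nat} \<times> {..<l} \<times> {..<4::nat}) + card ({1::nat} \<times> {..<q} \<times> {..<7::nat})"
    unfolding JJ_def by (rule card_Un_disjoint) auto
  then show ?thesis by (simp add: card_cartesian_product)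
qed

lemma U_red: assumes s: "s < 4"
  shows "(\<Sum>j\<in>JJ l q. t j * uvec rs j s i) = (\<Sum>k<l. t (0, k, s) * (rs ! k) i)"
proof -
  let ?A = "(\<lambda>k. (0::nat, k, s)) ` {..<l}"
  have sub: "?A \<subseteq> JJ l q" using s by (auto simp: JJ_def)
  have "(\<Sum>j\<in>JJ l q. t j * uvec rs j s i) = (\<Sum>j\<in>?A. t j * uvec rs j s i)"
    by (rule sum.mono_neutral_right[OF finite_JJ sub]) (auto simp: uvec_def JJ_def image_iff)
  also have "\<dots> = (\<Sum>k<l. t (0, k, s) * (rs ! k) i)"
    by (subst sum.reindex) (auto simp: inj_on_def uvec_def)
  finally show ?thesis .
qed

lemma N_red: assumes s: "s < 7"
  shows "(\<Sum>j\<in>JJ l q. t j * nmat Ms j s i i') = (\<Sum>k<q. t (1, k, s) * (Ms ! k) i i')"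
proof -
  let ?A = "(\<lambda>k. (1::nat, k, s)) ` {..<q}"
  have sub: "?A \<subseteq> JJ l q" using s by (auto simp: JJ_def)
  have "(\<Sum>j\<in>JJ l q. t j * nmat Ms j s i i') = (\<Sum>j\<in>?A. t j * nmat Ms j s i i')"
    by (rule sum.mono_neutral_right[OF finite_JJ sub]) (auto simp: nmat_def JJ_def image_iff)
  also have "\<dots> = (\<Sum>k<q. t (1, k, s) * (Ms ! k) i i')"
    by (subst sum.reindex) (auto simp: inj_on_def nmat_def)
  finally show ?thesis .
qed

lemma N_sym: assumes "\<And>M. M \<in> set Ms \<Longrightarrow> symmetric_mat n M"
  shows "symmetric_mat n (\<lambda>i i'. \<Sum>j\<in>JJ l (length Ms). t j * nmat Ms j s i i')"
proof -
  have "nmat Ms j s i i' = nmat Ms j s i' i" if "i < n" "i' < n" "j \<in> JJ l (length Ms)" for j i i'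
  proof (cases j)
    case (fields c k s0)
    show ?thesis
    proof (cases "c = 1 \<and> s0 = s")
      case True
      then have "k < length Ms" using that(3) fields by (auto simp: JJ_def)
      then have "symmetric_mat n (Ms ! k)" using assms by simp
      then show ?thesis using that True fields by (simp add: nmat_def symmetric_mat_def)
    next
      case False then show ?thesis using fields by (auto simp: nmat_def)
    qed
  qed
  then show ?thesis unfolding symmetric_mat_def by (auto intro!: sum.cong)
qed



lemma rank_set_fin: "finite {card S | S. S \<subseteq> {..<n} \<and> lin_indep_Fp p n S v}"
proof -
  have "{card S | S. S \<subseteq> {..<n} \<and> lin_indep_Fp p n S v} \<subseteq> card ` Pow {..<n}" by auto
  then show ?thesis by (rule finite_subset) simp
qed

lemma rank_set_ne: "{card S | S. S \<subseteq> {..<n} \<and> lin_indep_Fp p n S v} \<noteq> {}"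
proof -
  have "lin_indep_Fp p n {} v" by (simp add: lin_indep_Fp_def)
  then show ?thesis by blast
qed

lemma mat_rank_le: "mat_rank p n M \<le> n"
  unfolding mat_rank_def
  using rank_set_fin rank_set_ne
  by (subst Max_le_iff) (auto intro!: card_mono[of "{..<n}", simplified])

lemma mat_rank_obtain:
  obtains S where "S \<subseteq> {..<n}" "lin_indep_Fp p n S (\<lambda>k i. M i k)" "card S = mat_rank p n M"
proof -
  have "mat_rank p n M \<in> {card S | S. S \<subseteq> {..<n} \<and> lin_indep_Fp p n S (\<lambda>k i. M i k)}"
    unfolding mat_rank_def by (rule Max_in[OF rank_set_fin rank_set_ne])
  then show ?thesis using that by auto
qed

lemma quad_rank_le:
  assumes "Ms \<noteq> []" "\<forall>k<length Ms. 0 \<le> lam k \<and> lam k < int p" "\<forall>k. length Ms \<le> k \<longrightarrow> lam k = 0"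
    "\<exists>k<length Ms. lam k \<noteq> 0"
  shows "quad_rank p n Ms \<le> mat_rank p n (\<lambda>i j. (\<Sum>k<length Ms. lam k * (Ms ! k) i j) mod int p)"
proof -
  let ?A = "{mat_rank p n (\<lambda>i j. (\<Sum>k<length Ms. lam k * (Ms ! k) i j) mod int p) | lam.
                  (\<forall>k<length Ms. 0 \<le> lam k \<and> lam k < int p) \<and> (\<forall>k. length Ms \<le> k \<longrightarrow> lam k = 0)
                  \<and> (\<exists>k<length Ms. lam k \<noteq> 0)}"
  have "?A \<subseteq> {..n}" using mat_rank_le by auto
  then have fin: "finite ?A" by (rule finite_subset) simp
  have "mat_rank p n (\<lambda>i j. (\<Sum>k<length Ms. lam k * (Ms ! k) i j) mod int p) \<in> ?A"
    using assms(2-4) by blast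
  then have "Min ?A \<le> mat_rank p n (\<lambda>i j. (\<Sum>k<length Ms. lam k * (Ms ! k) i j) mod int p)"
    by (rule Min_le[OF fin])
  then show ?thesis using assms(1) by (simp add: quad_rank_def)
qed

lemma lin_char: assumes "p > 0"
  shows "(\<Sum>z\<in>V4 p n. om p (PhiL n U z)) =
     (\<Sum>x\<in>Fpn p n. om p (dt n x (U 0))) * (\<Sum>x\<in>Fpn p n. om p (dt n x (U 1))) *
     (\<Sum>x\<in>Fpn p n. om p (dt n x (U 2))) * (\<Sum>x\<in>Fpn p n. om p (dt n x (U 3)))"
proof -
  define F where "F s v = om p (dt n v (U s))" for s v
  have e1: "(\<Sum>z\<in>V4 p n. om p (PhiL n U z)) =
     (\<Sum>x\<in>Fpn p n. \<Sum>h1\<in>Fpn p n. \<Sum>h2\<in>Fpn p n. \<Sum>h3\<in>Fpn p n. F 0 x * F 1 h1 * F 2 h2 * F 3 h3)"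
    unfolding sum4 PhiL_def F_def by (simp add: om_add)
  have e2: "\<dots> = (\<Sum>x\<in>Fpn p n. F 0 x) * (\<Sum>x\<in>Fpn p n. F 1 x) * (\<Sum>x\<in>Fpn p n. F 2 x) * (\<Sum>x\<in>Fpn p n. F 3 x)"
    by (simp add: sum_distrib_left[symmetric] sum_distrib_right[symmetric] mult.assoc)
  show ?thesis using e1 e2 by (simp add: F_def)
qed



lemma error_bound:
  assumes pr: "prime p" and od: "odd p"
    and lin: "is_linear_factor p n rs" and quad: "is_purely_quadratic_factor p n Ms"
    and t: "t \<in> PiE (JJ (length rs) (length Ms)) (\<lambda>_. {0..<int p})"
    and nz: "\<exists>j\<in>JJ (length rs) (length Ms). t j \<noteq> 0"
  shows "norm (\<Sum>z\<in>V4 p n. om p (\<Sum>j\<in>JJ (length rs) (length Ms). t j * phi n rs Ms j z))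
           \<le> real p powr (4 * real n - real (quad_rank p n Ms) / 2)"
proof -
  define l where "l = length rs"
  define q where "q = length Ms"
  define J where "J = JJ l q"
  define U where "U = (\<lambda>s i. \<Sum>j\<in>J. t j * uvec rs j s i)"
  define N where "N = (\<lambda>s i i'. \<Sum>j\<in>J. t j * nmat Ms j s i i')"
  define R where "R = quad_rank p n Ms"
  define X where "X = real p powr (4 * real n - real R / 2)"
  have p0: "p > 0" using pr prime_gt_0_nat by blast
  have p1: "real p > 1" using pr prime_gt_1_nat by simp
  have X0: "X \<ge> 0" by (simp add: X_def)
  have symM: "\<And>M. M \<in> set Ms \<Longrightarrow> symmetric_mat n M" using quad by (simp add: is_purely_quadratic_factor_def)
  have eqS: "(\<Sum>j\<in>J. t j * phi n rs Ms j z) = PhiL n U z + PhiQ n N z" for z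
    unfolding U_def N_def by (rule phi_sum)
  have tJ: "t j \<in> {0..<int p}" if "j \<in> J" for j using t that by (auto simp: J_def l_def q_def)
  show ?thesis
  proof (cases "\<exists>j\<in>J. fst j = 1 \<and> t j \<noteq> 0")
    case True
    then obtain c k0 s where j: "(c, k0, s) \<in> J" "c = 1" "t (c, k0, s) \<noteq> 0" by auto
    then have k0: "k0 < q" and s: "s < 7" by (auto simp: J_def JJ_def)
    define lam where "lam k = (if k < q then t (1, k, s) else 0)" for k
    have lamc: "\<forall>k<length Ms. 0 \<le> lam k \<and> lam k < int p" "\<forall>k. length Ms \<le> k \<longrightarrow> lam k = 0"
       "\<exists>k<length Ms. lam k \<noteq> 0"
    proof -
      show "\<forall>k<length Ms. 0 \<le> lam k \<and> lam k < int p"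
      proof (intro allI impI)
        fix k assume "k < length Ms"
        then have "(1, k, s) \<in> J" using s by (auto simp: J_def JJ_def q_def)
        then show "0 \<le> lam k \<and> lam k < int p" using tJ \<open>k < length Ms\<close> by (auto simp: lam_def q_def)
      qed
      show "\<forall>k. length Ms \<le> k \<longrightarrow> lam k = 0" by (simp add: lam_def q_def)
      show "\<exists>k<length Ms. lam k \<noteq> 0" using k0 j by (auto simp: lam_def q_def)
    qed
    have Msne: "Ms \<noteq> []" using k0 by (auto simp: q_def)
    have Rle: "R \<le> mat_rank p n (\<lambda>i j. (\<Sum>k<length Ms. lam k * (Ms ! k) i j) mod int p)"
      unfolding R_def by (rule quad_rank_le[OF Msne lamc])
    have Neq: "(\<lambda>i j. (\<Sum>k<length Ms. lam k * (Ms ! k) i j) mod int p) = (\<lambda>i j. N s i j mod int p)"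
      unfolding N_def J_def using N_red[OF s] by (simp add: lam_def q_def)
    obtain S where S: "S \<subseteq> {..<n}" and li: "lin_indep_Fp p n S (\<lambda>k i. N s i k mod int p)"
      and cS: "card S = mat_rank p n (\<lambda>i j. N s i j mod int p)"
      by (rule mat_rank_obtain[of n p "\<lambda>i j. N s i j mod int p"]) auto
    have RS: "R \<le> card S" using Rle Neq cS by simp
    have symN: "\<And>k. symmetric_mat n (N k)"
      unfolding N_def J_def l_def q_def by (rule N_sym[OF symM])
    define A where "A = norm (\<Sum>z\<in>V4 p n. om p (PhiL n U z + PhiQ n N z))"
    have h1: "A ^ 2 \<le> real p ^ (4 * n) * real (card (KK p n N))"
      unfolding A_def KK_def by (rule square_bound[OF p0 symN])
    have h2: "real (card (KK p n N)) * real p ^ card S \<le> real p ^ (4 * n)"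
      using Kcard[where N = N, OF pr od s S li] by (metis of_nat_le_iff of_nat_mult of_nat_power)
    have h3: "real p ^ R \<le> real p ^ card S" using RS p1 by (simp add: power_increasing)
    have h4: "A ^ 2 * real p ^ R \<le> real p ^ (4 * n) * real p ^ (4 * n)"
    proof -
      have "A ^ 2 * real p ^ R \<le> real p ^ (4 * n) * real (card (KK p n N)) * real p ^ R"
        using h1 by (simp add: mult_right_mono)
      also have "\<dots> \<le> real p ^ (4 * n) * real (card (KK p n N)) * real p ^ card S"
        using h3 by (simp add: mult_left_mono)
      also have "\<dots> \<le> real p ^ (4 * n) * real p ^ (4 * n)"
        using h2 by (simp add: mult.assoc mult_left_mono)
      finally show ?thesis .
    qed
    have X2: "X ^ 2 * real p ^ R = real p ^ (4 * n) * real p ^ (4 * n)"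
    proof -
      have "X ^ 2 * real p ^ R = real p powr (4 * real n - real R / 2) * real p powr (4 * real n - real R / 2) * real p powr real R"
        using p0 by (simp add: X_def power2_eq_square powr_realpow)
      also have "\<dots> = real p powr (real (4 * n) + real (4 * n))"
        by (simp add: powr_add[symmetric] algebra_simps)
      also have "\<dots> = real p ^ (4 * n) * real p ^ (4 * n)"
        unfolding powr_add using powr_realpow[of "real p" "4 * n"] p0 by simp
      finally show ?thesis .
    qed
    have "A ^ 2 \<le> X ^ 2"
    proof -
      have "A ^ 2 * real p ^ R \<le> X ^ 2 * real p ^ R" using h4 X2 by simp
      moreover have "real p ^ R > 0" using p0 by simp
      ultimately show ?thesis by simp
    qed
    then have "A \<le> X" using X0 by (rule power2_le_imp_le)
    then show ?thesis unfolding A_def X_def R_def using eqS by (simp add: J_def l_def q_def)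
  next
    case False
    have N0: "N = (\<lambda>_ _ _. 0)"
    proof (intro ext)
      fix s i i'
      show "N s i i' = 0" unfolding N_def
      proof (rule sum.neutral, intro ballI)
        fix j assume "j \<in> J"
        then show "t j * nmat Ms j s i i' = 0" using False by (cases j) (auto simp: nmat_def)
      qed
    qed
    have Q0: "PhiQ n N z = 0" for z unfolding N0 by (cases z) (simp add: PhiQ_def)
    obtain j where jJ: "j \<in> J" and tj: "t j \<noteq> 0" using nz by (auto simp: J_def l_def q_def)
    obtain c k s where jj: "j = (c, k, s)" by (cases j) auto
    have c0: "c = 0" using False jJ tj jj by (auto simp: J_def JJ_def)
    have k: "k < l" and s: "s < 4" using jJ jj c0 by (auto simp: J_def JJ_def)
    have Ured: "U s i = (\<Sum>k<l. t (0, k, s) * (rs ! k) i)" for i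
      unfolding U_def J_def by (rule U_red[OF s])
    have notall: "\<not> (\<forall>i<n. int p dvd U s i)"
    proof
      assume H: "\<forall>i<n. int p dvd U s i"
      define cf where "cf k = t (0, k, s)" for k
      have "(\<forall>k\<in>{..<length rs}. 0 \<le> cf k \<and> cf k < int p) \<and>
            (\<forall>i<n. (\<Sum>k\<in>{..<length rs}. cf k * (rs ! k) i) mod int p = 0)"
      proof (intro conjI ballI allI impI)
        fix k' assume "k' \<in> {..<length rs}"
        then have "(0, k', s) \<in> J" using s by (auto simp: J_def JJ_def l_def)
        then show "0 \<le> cf k'" "cf k' < int p" using tJ by (auto simp: cf_def)
      next
        fix i assume "i < n"
        then show "(\<Sum>k\<in>{..<length rs}. cf k * (rs ! k) i) mod int p = 0"
          using H[rule_format, OF \<open>i < n\<close>] Ured[of i] by (simp add: cf_def l_def)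
      qed
      then have "\<forall>k\<in>{..<length rs}. cf k = 0"
        using lin unfolding is_linear_factor_def lin_indep_Fp_def by blast
      then show False using k tj jj c0 by (simp add: cf_def l_def)
    qed
    have "(\<Sum>x\<in>Fpn p n. om p (dt n x (U s))) = 0"
      using char_V[OF p0, of n "U s"] notall by simp
    then have "(\<Sum>z\<in>V4 p n. om p (PhiL n U z)) = 0"
      using s unfolding lin_char[OF p0] by (auto simp: all4[symmetric, where P = "\<lambda>s. s = s"] less_Suc_eq numeral_eq_Suc)
    then show ?thesis using eqS Q0 X0 by (simp add: J_def l_def q_def X_def R_def)
  qed
qed



theorem mainTheorem6:
  fixes p :: nat
  assumes "prime p" and "odd p"
  shows "\<exists>C::real. C > 0 \<and>
    (\<forall>(\<epsilon>::real) (n::nat) rs Ms B.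
       0 < \<epsilon> \<and> \<epsilon> < 1 \<and>
       is_linear_factor p n rs \<and> is_purely_quadratic_factor p n Ms \<and>
       real (quad_rank p n Ms) \<ge> C * (real (length rs) + real (length Ms) + log (real p) (1 / \<epsilon>)) \<and>
       B \<in> atoms p n rs Ms
       \<longrightarrow>
       \<bar>real (card (Omega p n B)) - real p powr (4 * real n - 4 * real (length rs) - 7 * real (length Ms))\<bar>
         \<le> \<epsilon> * real p powr (4 * real n - 4 * real (length rs) - 7 * real (length Ms)))"
proof (intro exI[of _ 14] conjI allI impI)
  show "(14::real) > 0" by simp
  fix \<epsilon> :: real and n :: nat and rs Ms B
  assume H: "0 < \<epsilon> \<and> \<epsilon> < 1 \<and>
       is_linear_factor p n rs \<and> is_purely_quadratic_factor p n Ms \<and>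
       real (quad_rank p n Ms) \<ge> 14 * (real (length rs) + real (length Ms) + log (real p) (1 / \<epsilon>)) \<and>
       B \<in> atoms p n rs Ms"
  have pr: "prime p" and od: "odd p" using assms by auto
  have p0: "p > 0" using pr prime_gt_0_nat by blast
  have p1: "real p > 1" using pr prime_gt_1_nat by simp
  have e0: "0 < \<epsilon>" and e1: "\<epsilon> < 1" and lin: "is_linear_factor p n rs"
    and quad: "is_purely_quadratic_factor p n Ms"
    and Rh: "real (quad_rank p n Ms) \<ge> 14 * (real (length rs) + real (length Ms) + log (real p) (1 / \<epsilon>))"
    and Ba: "B \<in> atoms p n rs Ms" using H by auto
  obtain a b where B: "B = {x \<in> Fpn p n. beta_factor p n rs Ms x = (a, b)}"
    and la: "length a = length rs" and lb: "length b = length Ms"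
    and ra: "set a \<subseteq> {0..<int p}" and rb: "set b \<subseteq> {0..<int p}"
    using Ba unfolding atoms_def by blast
  have symM: "\<And>M. M \<in> set Ms \<Longrightarrow> symmetric_mat n M" using quad by (simp add: is_purely_quadratic_factor_def)
  define l where "l = length rs"
  define q where "q = length Ms"
  define R where "R = quad_rank p n Ms"
  define X where "X = real p powr (4 * real n - real R / 2)"
  define L where "L = log (real p) (1 / \<epsilon>)"
  define M where "M = real p powr (4 * real n - 4 * real l - 7 * real q)"
  have X0: "X \<ge> 0" by (simp add: X_def)
  have Om: "Omega p n B = {z\<in>V4 p n. \<forall>j\<in>JJ l q. int p dvd phi n rs Ms j z - cc a b j}"
    unfolding l_def q_def by (rule Omega_char[OF p0 B la lb ra rb symM])
  have finV: "finite (V4 p n)" using finite_Fpn by simp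
  have cb: "\<bar>real (card {z\<in>V4 p n. \<forall>j\<in>JJ l q. int p dvd (phi n rs Ms j z - cc a b j)})
             - real (card (V4 p n)) / real p ^ card (JJ l q)\<bar> \<le> X"
  proof (rule count_bound[OF p0 finV finite_JJ X0])
    fix t assume t: "t \<in> PiE (JJ l q) (\<lambda>_. {0..<int p})" and nz: "\<exists>j\<in>JJ l q. t j \<noteq> 0"
    show "norm (\<Sum>z\<in>V4 p n. om p (\<Sum>j\<in>JJ l q. t j * phi n rs Ms j z)) \<le> X"
      using error_bound[OF pr od lin quad] t nz unfolding X_def R_def l_def q_def by blast
  qed
  have cV: "card (V4 p n) = p ^ (4 * n)"
    by (simp add: card_cartesian_product card_Fpn power_add[symmetric] numeral_eq_Suc)
  have main: "real (card (V4 p n)) / real p ^ card (JJ l q) = M"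
  proof -
    have a1: "real p powr (4 * real n) = real p ^ (4 * n)"
      using powr_realpow[of "real p" "4 * n"] p0 by simp
    have a2: "real p powr (4 * real l + 7 * real q) = real p ^ (4 * l + 7 * q)"
      using powr_realpow[of "real p" "4 * l + 7 * q"] p0 by simp
    have "M = real p powr (4 * real n) / real p powr (4 * real l + 7 * real q)"
      unfolding M_def by (simp add: powr_diff[symmetric] algebra_simps)
    then show ?thesis using a1 a2 cV card_JJ by simp
  qed
  have L0: "L > 0"
  proof -
    have "ln (1 / \<epsilon>) > 0" using e0 e1 by simp
    moreover have "ln (real p) > 0" using p1 by simp
    ultimately show ?thesis by (simp add: L_def log_def)
  qed
  have epsL: "real p powr (- L) = \<epsilon>"
  proof -
    have "real p powr L = 1 / \<epsilon>" unfolding L_def using p1 e0 by simp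
    then show ?thesis by (simp add: powr_minus)
  qed
  have "X \<le> real p powr ((4 * real n - 4 * real l - 7 * real q) + (- L))"
  proof -
    have "real R \<ge> 14 * (real l + real q + L)" using Rh by (simp add: R_def l_def q_def L_def)
    then have "4 * real n - real R / 2 \<le> (4 * real n - 4 * real l - 7 * real q) + (- L)"
      using L0 by simp
    then show ?thesis unfolding X_def using p1 by (simp add: powr_mono)
  qed
  also have "\<dots> = \<epsilon> * M" unfolding M_def powr_add epsL by simp
  finally have XM: "X \<le> \<epsilon> * M" .
  show "\<bar>real (card (Omega p n B)) - real p powr (4 * real n - 4 * real (length rs) - 7 * real (length Ms))\<bar>
         \<le> \<epsilon> * real p powr (4 * real n - 4 * real (length rs) - 7 * real (length Ms))"
  proof -
    have cb': "\<bar>real (card (Omega p n B)) - M\<bar> \<le> X" using cb unfolding main Om .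
    show ?thesis using cb' XM unfolding M_def l_def q_def by linarith
  qed
qed


end
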